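(* Let $\mathcal C$ be a $k$-coloured operad. Let $\mathcal H(t)=\sum_{n\ge1}\#\mathrm{Env}(\mathcal C)(n)\,t^n$ be the Hilbert series of its enveloping operad. For $c\in[k]$, let $\mathcal H_c(t)$ be the generating series, by arity, of the anticoloured syntax trees on $\mathcal C^+$ whose root has output colour $c$. Then $$\mathcal H(t)=t+\mathcal H_1(t)+\dots+\mathcal H_k(t),$$ and for all $c\in[k]$, $$\mathcal H_c(t)=\mathcal B_c\big(\mathcal H(t)-\mathcal H_1(t),\dots,\mathcal H(t)-\mathcal H_k(t)\big),$$ where $\mathcal B_1,\dots,\mathcal B_k$ are the coloured Hilbert series of $\mathcal C$.
   Context: All operads are nonsymmetric operads in the category of sets. Fix $k\ge1$ and write $[k]=\{1,\dots,k\}$. A $k$-coloured operad $\mathcal C=\biguplus_{n\ge1}\mathcal C(n)$ assigns to each $x\in\mathcal C(n)$ an output colour $\mathrm{Out}(x)\in[k]$ and input colours $\mathrm{In}_1(x),\dots,\mathrm{In}_n(x)$. It has partial compositions $x\circ_i y$, defined exactly when $\mathrm{Out}(y)=\mathrm{In}_i(x)$, satisfying the usual axioms. It is assumed that $\mathcal C(1)=\{\mathbf 1_c:c\in[k]\}$ consists of units and that each $\mathcal C(n)$ is finite. Let $\mathcal C^+=\mathcal C\setminus\mathcal C(1)$. The enveloping operad $\mathrm{Env}(\mathcal C)$ is the quotient of the free uncoloured operad on $\mathcal C^+$ (colours forgotten) by the smallest operadic congruence with $\mathfrak c(x)\circ_i\mathfrak c(y)\equiv\mathfrak c(x\circ_i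 y)$ whenever $x\circ_i y$ is defined in $\mathcal C$, where $\mathfrak c(x)$ is the corolla labelled $x$. Its elements of arity $n$ are in bijection with the anticoloured syntax trees on $\mathcal C^+$ with $n$ leaves (the one-leaf tree corresponding to the unit). An anticoloured syntax tree is a planar rooted tree whose internal nodes of arity $\ell$ are labelled by elements of $\mathcal C(\ell)$, such that whenever a node labelled $y$ is the $i$th child of a node labelled $x$, one has $\mathrm{In}_i(x)\ne\mathrm{Out}(y)$. The output colour of such a tree is the output colour of the label of its root. The coloured Hilbert series of $\mathcal C$ are the commutative series $$\mathcal B_c(z_1,\dots,z_k)=\sum_{x\in\mathcal C^+,\ \mathrm{Out}(x)=c}\ \prod_{i=1}^{|x|}z_{\mathrm{In}_i(x)},\qquad c\in[k],$$ where $|x|$ is the arity of $x$. *)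

theory Defs
  imports "HOL-Computational_Algebra.Formal_Power_Series"
begin

text \<open>A k-coloured nonsymmetric set operad. Colours are 1..k, input positions are 1-based.
  comp x i y is the partial composition x o_i y; unit c is the unit of colour c.\<close>

record 'a col_operad =
  elts :: "'a set"
  ar   :: "'a \<Rightarrow> nat"
  outc :: "'a \<Rightarrow> nat"
  inc  :: "'a \<Rightarrow> nat \<Rightarrow> nat"
  comp :: "'a \<Rightarrow> nat \<Rightarrow> 'a \<Rightarrow> 'a"
  unit :: "nat \<Rightarrow> 'a"

definition coloured_operad :: "nat \<Rightarrow> 'a col_operad \<Rightarrow> bool" where
  "coloured_operad k C \<longleftrightarrow>
     (\<forall>x\<in>elts C. ar C x \<ge> 1 \<and> outc C x \<in> {1..k} \<and> (\<forall>i\<in>{1..ar C x}. inc C x i \<in> {1..k})) \<and>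
     (\<forall>c\<in>{1..k}. unit C c \<in> elts C \<and> ar C (unit C c) = 1 \<and> outc C (unit C c) = c
                 \<and> inc C (unit C c) 1 = c) \<and>
     (\<forall>x\<in>elts C. ar C x = 1 \<longrightarrow> (\<exists>c\<in>{1..k}. x = unit C c)) \<and>
     (\<forall>n. finite {x\<in>elts C. ar C x = n}) \<and>
     (\<forall>x\<in>elts C. \<forall>y\<in>elts C. \<forall>i\<in>{1..ar C x}. outc C y = inc C x i \<longrightarrow>
        comp C x i y \<in> elts C \<and> ar C (comp C x i y) = ar C x + ar C y - 1 \<and>
        outc C (comp C x i y) = outc C x \<and>
        (\<forall>j\<in>{1..ar C x + ar C y - 1}. inc C (comp C x i y) j =
            (if j < i then inc C x j
             else if j < i + ar C y then inc C y (j - i + 1)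
             else inc C x (j - ar C y + 1)))) \<and>
     (\<forall>x\<in>elts C. \<forall>y\<in>elts C. \<forall>z\<in>elts C. \<forall>i\<in>{1..ar C x}. \<forall>j\<in>{1..ar C y}.
        outc C y = inc C x i \<longrightarrow> outc C z = inc C y j \<longrightarrow>
        comp C (comp C x i y) (i + j - 1) z = comp C x i (comp C y j z)) \<and>
     (\<forall>x\<in>elts C. \<forall>y\<in>elts C. \<forall>z\<in>elts C. \<forall>i j. 1 \<le> i \<longrightarrow> i < j \<longrightarrow> j \<le> ar C x \<longrightarrow>
        outc C y = inc C x i \<longrightarrow> outc C z = inc C x j \<longrightarrow>
        comp C (comp C x i y) (j + ar C y - 1) z = comp C (comp C x j z) i y) \<and>
     (\<forall>x\<in>elts C. comp C (unit C (outc C x)) 1 x = x \<and>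
        (\<forall>i\<in>{1..ar C x}. comp C x i (unit C (inc C x i)) = x))"

datatype 'a tree = Leaf | Node 'a "'a tree list"

fun leaves :: "'a tree \<Rightarrow> nat" where
  "leaves Leaf = 1"
| "leaves (Node x ts) = sum_list (map leaves ts)"

text \<open>Syntax trees of the (uncoloured) free operad on C^+: internal nodes of arity l labelled
  by elements of C(l), l \<noteq> 1.\<close>
inductive ftree :: "('a, 'b) col_operad_scheme \<Rightarrow> 'a tree \<Rightarrow> bool" for C where
  ftree_leaf: "ftree C Leaf"
| ftree_node: "x \<in> elts C \<Longrightarrow> ar C x \<noteq> 1 \<Longrightarrow> length ts = ar C x \<Longrightarrow>
     (\<forall>t\<in>set ts. ftree C t) \<Longrightarrow> ftree C (Node x ts)"

text \<open>Grafting s on the i-th leaf (1-based, left to right) of t: the partial composition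
  t o_i s of the free operad.\<close>
fun graft :: "'a tree \<Rightarrow> nat \<Rightarrow> 'a tree \<Rightarrow> 'a tree"
and graft_list :: "'a tree list \<Rightarrow> nat \<Rightarrow> 'a tree \<Rightarrow> 'a tree list" where
  "graft Leaf i s = (if i = 1 then s else Leaf)"
| "graft (Node x ts) i s = Node x (graft_list ts i s)"
| "graft_list [] i s = []"
| "graft_list (t # ts) i s =
     (if i \<le> leaves t then graft t i s # ts else t # graft_list ts (i - leaves t) s)"

definition corolla :: "('a, 'b) col_operad_scheme \<Rightarrow> 'a \<Rightarrow> 'a tree" where
  "corolla C x = Node x (replicate (ar C x) Leaf)"

inductive env_rel :: "('a, 'b) col_operad_scheme \<Rightarrow> 'a tree \<Rightarrow> 'a tree \<Rightarrow> bool" for C where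
  env_gen: "x \<in> elts C \<Longrightarrow> ar C x \<noteq> 1 \<Longrightarrow> y \<in> elts C \<Longrightarrow> ar C y \<noteq> 1 \<Longrightarrow>
     1 \<le> i \<Longrightarrow> i \<le> ar C x \<Longrightarrow> outc C y = inc C x i \<Longrightarrow>
     env_rel C (graft (corolla C x) i (corolla C y)) (corolla C (comp C x i y))"
| env_refl: "ftree C t \<Longrightarrow> env_rel C t t"
| env_sym: "env_rel C s t \<Longrightarrow> env_rel C t s"
| env_trans: "env_rel C s t \<Longrightarrow> env_rel C t u \<Longrightarrow> env_rel C s u"
| env_left: "env_rel C s s' \<Longrightarrow> ftree C t \<Longrightarrow> 1 \<le> i \<Longrightarrow> i \<le> leaves t \<Longrightarrow>
     env_rel C (graft t i s) (graft t i s')"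
| env_right: "env_rel C s s' \<Longrightarrow> ftree C t \<Longrightarrow> 1 \<le> i \<Longrightarrow> i \<le> leaves s \<Longrightarrow>
     env_rel C (graft s i t) (graft s' i t)"

definition Env :: "('a, 'b) col_operad_scheme \<Rightarrow> nat \<Rightarrow> 'a tree set set" where
  "Env C n = {t. ftree C t \<and> leaves t = n} // {(s, t). env_rel C s t}"

definition env_hilbert :: "('a, 'b) col_operad_scheme \<Rightarrow> int fps" where
  "env_hilbert C = Abs_fps (\<lambda>n. of_nat (card (Env C n)))"

inductive anti :: "('a, 'b) col_operad_scheme \<Rightarrow> 'a tree \<Rightarrow> bool" for C where
  anti_leaf: "anti C Leaf"
| anti_node: "x \<in> elts C \<Longrightarrow> ar C x \<noteq> 1 \<Longrightarrow> length ts = ar C x \<Longrightarrow>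
     (\<forall>i<length ts. anti C (ts ! i) \<and>
        (\<forall>y us. ts ! i = Node y us \<longrightarrow> outc C y \<noteq> inc C x (Suc i))) \<Longrightarrow>
     anti C (Node x ts)"

definition anti_hilbert :: "('a, 'b) col_operad_scheme \<Rightarrow> nat \<Rightarrow> int fps" where
  "anti_hilbert C c = Abs_fps (\<lambda>n. of_nat (card
     {t. anti C t \<and> leaves t = n \<and> (\<exists>x ts. t = Node x ts \<and> outc C x = c)}))"

text \<open>B_c as a multivariate series in z_1..z_k: its coefficient at the monomial
  prod_d z_d^(alpha d) (alpha supported on 1..k).\<close>
definition coloured_hilbert :: "('a, 'b) col_operad_scheme \<Rightarrow> nat \<Rightarrow> (nat \<Rightarrow> nat) \<Rightarrow> nat" where
  "coloured_hilbert C c \<alpha> = card {x \<in> elts C. ar C x \<noteq> 1 \<and> outc C x = c \<and>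
      (\<forall>d. \<alpha> d = card {i \<in> {1..ar C x}. inc C x i = d})}"

text \<open>Substitution z_d := F d into a multivariate series B (given by its coefficients) in
  k variables. This is the usual composition, valid when all F d have zero constant term:
  then only monomials of total degree \<le> m contribute to the coefficient of t^m.\<close>
definition msubst :: "nat \<Rightarrow> ((nat \<Rightarrow> nat) \<Rightarrow> nat) \<Rightarrow> (nat \<Rightarrow> int fps) \<Rightarrow> int fps" where
  "msubst k B F = Abs_fps (\<lambda>m. \<Sum>\<alpha> \<in> {\<alpha>. (\<forall>d. d \<notin> {1..k} \<longrightarrow> \<alpha> d = 0) \<and> (\<Sum>d\<in>{1..k}. \<alpha> d) \<le> m}.
      of_nat (B \<alpha>) * fps_nth (\<Prod>d\<in>{1..k}. F d ^ \<alpha> d) m)"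

end

theory Submission
  imports Defs
begin


fun gam :: "'a col_operad \<Rightarrow> 'a \<Rightarrow> nat \<Rightarrow> 'a list \<Rightarrow> 'a" where
  "gam C x i [] = x"
| "gam C x i (r # rs) = comp C (gam C x (Suc i) rs) i r"

lemma gam_append: "gam C x i (A @ R) = gam C (gam C x (i + length A) R) i A"
  by (induction A arbitrary: i) auto

locale cop =
  fixes k :: nat and C :: "'a col_operad"
  assumes CO: "coloured_operad k C"
begin

lemmas CU = CO[unfolded coloured_operad_def]
lemmas CU1 = CU[THEN conjunct1] and CU2 = CU[THEN conjunct2, THEN conjunct1]
  and CU3 = CU[THEN conjunct2, THEN conjunct2, THEN conjunct1]
  and CU4 = CU[THEN conjunct2, THEN conjunct2, THEN conjunct2, THEN conjunct1]
  and CU5 = CU[THEN conjunct2, THEN conjunct2, THEN conjunct2, THEN conjunct2, THEN conjunct1]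
  and CU6 = CU[THEN conjunct2, THEN conjunct2, THEN conjunct2, THEN conjunct2, THEN conjunct2, THEN conjunct1]
  and CU7 = CU[THEN conjunct2, THEN conjunct2, THEN conjunct2, THEN conjunct2, THEN conjunct2, THEN conjunct2, THEN conjunct1]
  and CU8 = CU[THEN conjunct2, THEN conjunct2, THEN conjunct2, THEN conjunct2, THEN conjunct2, THEN conjunct2, THEN conjunct2]

definition incs where "incs x = map (inc C x) [1..<Suc (ar C x)]"

lemma length_incs[simp]: "length (incs x) = ar C x" by (simp add: incs_def del: upt_Suc)
lemma nth_incs: "i < ar C x \<Longrightarrow> incs x ! i = inc C x (Suc i)"
  by (simp add: incs_def del: upt_Suc)

lemma ax_elt: "x \<in> elts C \<Longrightarrow> ar C x \<ge> 1 \<and> outc C x \<in> {1..k} \<and> (\<forall>i\<in>{1..ar C x}. inc C x i \<in> {1..k})"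
  using CU1 by blast
lemma ax_unit: "c \<in> {1..k} \<Longrightarrow> unit C c \<in> elts C \<and> ar C (unit C c) = 1 \<and> outc C (unit C c) = c \<and> inc C (unit C c) 1 = c"
  using CU2 by blast
lemma ax_ar1: "x \<in> elts C \<Longrightarrow> ar C x = 1 \<Longrightarrow> \<exists>c\<in>{1..k}. x = unit C c"
  using CU3 by blast
lemma ax_fin: "finite {x\<in>elts C. ar C x = n}"
  using CU4 by blast
lemma ax_comp: "x \<in> elts C \<Longrightarrow> y \<in> elts C \<Longrightarrow> i\<in>{1..ar C x} \<Longrightarrow> outc C y = inc C x i \<Longrightarrow>
        comp C x i y \<in> elts C \<and> ar C (comp C x i y) = ar C x + ar C y - 1 \<and>
        outc C (comp C x i y) = outc C x \<and>
        (\<forall>j\<in>{1..ar C x + ar C y - 1}. inc C (comp C x i y) j =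
            (if j < i then inc C x j
             else if j < i + ar C y then inc C y (j - i + 1)
             else inc C x (j - ar C y + 1)))"
  using CU5 by blast
lemma ax_seq: "x\<in>elts C \<Longrightarrow> y\<in>elts C \<Longrightarrow> z\<in>elts C \<Longrightarrow> i\<in>{1..ar C x} \<Longrightarrow> j\<in>{1..ar C y} \<Longrightarrow>
        outc C y = inc C x i \<Longrightarrow> outc C z = inc C y j \<Longrightarrow>
        comp C (comp C x i y) (i + j - 1) z = comp C x i (comp C y j z)"
  using CU6 by blast
lemma ax_par: "x\<in>elts C \<Longrightarrow> y\<in>elts C \<Longrightarrow> z\<in>elts C \<Longrightarrow> 1 \<le> i \<Longrightarrow> i < j \<Longrightarrow> j \<le> ar C x \<Longrightarrow>
        outc C y = inc C x i \<Longrightarrow> outc C z = inc C x j \<Longrightarrow>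
        comp C (comp C x i y) (j + ar C y - 1) z = comp C (comp C x j z) i y"
  using CU7 by blast
lemma ax_unitr: "x\<in>elts C \<Longrightarrow> i\<in>{1..ar C x} \<Longrightarrow> comp C x i (unit C (inc C x i)) = x"
  using CU8 by blast

lemma ar_pos: "x \<in> elts C \<Longrightarrow> ar C x \<ge> 1" using ax_elt by blast

lemma incs_comp:
  assumes "x \<in> elts C" "y \<in> elts C" "1 \<le> i" "i \<le> ar C x" "outc C y = inc C x i"
  shows "incs (comp C x i y) = take (i-1) (incs x) @ incs y @ drop i (incs x)"
proof -
  have A: "comp C x i y \<in> elts C \<and> ar C (comp C x i y) = ar C x + ar C y - 1 \<and>
        (\<forall>j\<in>{1..ar C x + ar C y - 1}. inc C (comp C x i y) j =
            (if j < i then inc C x j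
             else if j < i + ar C y then inc C y (j - i + 1)
             else inc C x (j - ar C y + 1)))" using ax_comp assms by auto
  have py: "ar C y \<ge> 1" using ar_pos assms by auto
  show ?thesis
  proof (rule nth_equalityI)
    show "length (incs (comp C x i y)) = length (take (i-1) (incs x) @ incs y @ drop i (incs x))"
      using A assms py by simp
    fix j assume "j < length (incs (comp C x i y))"
    hence j: "j < ar C x + ar C y - 1" using A by simp
    have e: "inc C (comp C x i y) (Suc j) = (if Suc j < i then inc C x (Suc j)
             else if Suc j < i + ar C y then inc C y (Suc j - i + 1)
             else inc C x (Suc j - ar C y + 1))" using A j by auto
    show "incs (comp C x i y) ! j = (take (i-1) (incs x) @ incs y @ drop i (incs x)) ! j"
      using j A assms py e by (auto simp: nth_append nth_incs min_def)
  qed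
qed

definition typd where "typd x i rs = list_all2 (\<lambda>r c. r \<in> elts C \<and> outc C r = c) rs (drop (i-1) (incs x))"

lemma typd_Cons: "1 \<le> i \<Longrightarrow> i \<le> ar C x \<Longrightarrow> typd x i (r # rs) \<longleftrightarrow> r \<in> elts C \<and> outc C r = inc C x i \<and> typd x (Suc i) rs"
proof -
  assume i: "1 \<le> i" "i \<le> ar C x"
  have "drop (i-1) (incs x) = incs x ! (i-1) # drop (Suc (i-1)) (incs x)"
    by (rule Cons_nth_drop_Suc[symmetric]) (use i in simp)
  also have "Suc (i-1) = i" using i by simp
  finally have "drop (i-1) (incs x) = incs x ! (i-1) # drop i (incs x)" .
  moreover have "incs x ! (i-1) = inc C x i" using i by (simp add: nth_incs)
  ultimately show ?thesis by (simp add: typd_def)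
qed

lemma gam_typ:
  assumes "x \<in> elts C" "1 \<le> i" "i - 1 + length rs = ar C x" "typd x i rs"
  shows "gam C x i rs \<in> elts C \<and> outc C (gam C x i rs) = outc C x \<and>
    incs (gam C x i rs) = take (i-1) (incs x) @ concat (map incs rs)"
  using assms(2-4)
proof (induction rs arbitrary: i)
  case Nil
  then show ?case using assms(1) by simp
next
  case (Cons r rs)
  have i: "i \<le> ar C x" using Cons.prems by simp
  have t: "r \<in> elts C" "outc C r = inc C x i" "typd x (Suc i) rs" using typd_Cons[OF Cons.prems(1) i] Cons.prems by auto
  let ?w = "gam C x (Suc i) rs"
  have IH: "?w \<in> elts C \<and> outc C ?w = outc C x \<and> incs ?w = take i (incs x) @ concat (map incs rs)"
    using Cons.IH[of "Suc i"] Cons.prems t by simp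
  have "ar C ?w = length (incs ?w)" by simp
  also have "\<dots> = i + length (concat (map incs rs))" using IH i by simp
  finally have arw: "i \<le> ar C ?w" by simp
  have "incs ?w ! (i-1) = incs x ! (i-1)" using IH i Cons.prems(1) by (simp add: nth_append)
  hence incw: "inc C ?w i = inc C x i" using i arw Cons.prems(1) by (simp add: nth_incs)
  have "gam C x i (r # rs) = comp C ?w i r" by simp
  moreover have "comp C ?w i r \<in> elts C \<and> outc C (comp C ?w i r) = outc C x"
    using ax_comp[of ?w r i] IH t incw i arw Cons.prems(1) by auto
  moreover have "incs (comp C ?w i r) = take (i-1) (incs x) @ concat (map incs (r#rs))"
    using incs_comp[of ?w r i] IH t incw arw Cons.prems(1) i by (simp add: min_def)
  ultimately show ?case by simp
qed

lemma inc_gam_lt: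
  assumes "x \<in> elts C" "1 \<le> i" "i - 1 + length rs = ar C x" "typd x i rs" "1 \<le> p" "p < i"
  shows "inc C (gam C x i rs) p = inc C x p" "p \<le> ar C (gam C x i rs)"
proof -
  have g: "incs (gam C x i rs) = take (i-1) (incs x) @ concat (map incs rs)" using gam_typ assms by blast
  have pl: "p \<le> ar C x" using assms by simp
  show "p \<le> ar C (gam C x i rs)" using g[THEN arg_cong[where f=length]] assms by simp
  have pi: "p - 1 < i - 1" "p - 1 < ar C x" using assms by auto
  hence "incs (gam C x i rs) ! (p-1) = incs x ! (p-1)" using g by (simp add: nth_append)
  moreover have "incs (gam C x i rs) ! (p-1) = inc C (gam C x i rs) p"
    using nth_incs[of "p-1" "gam C x i rs"] assms \<open>p \<le> ar C (gam C x i rs)\<close> by simp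
  moreover have "incs x ! (p-1) = inc C x p"
    using nth_incs[of "p-1" x] assms pl by simp
  ultimately show "inc C (gam C x i rs) p = inc C x p" by simp
qed

lemma gam_par:
  assumes "x \<in> elts C" "y \<in> elts C" "1 \<le> j" "j < i" "i - 1 + length B = ar C x"
    "outc C y = inc C x j" "typd x i B"
  shows "gam C (comp C x j y) (i + ar C y - 1) B = comp C (gam C x i B) j y"
  using assms(4,5,7)
proof (induction B arbitrary: i)
  case Nil
  then show ?case by simp
next
  case (Cons b B)
  have i: "1 \<le> i" "i \<le> ar C x" using Cons.prems assms by auto
  have t: "b \<in> elts C" "outc C b = inc C x i" "typd x (Suc i) B" using typd_Cons[OF i] Cons.prems by auto
  let ?w = "gam C x (Suc i) B"
  have py: "ar C y \<ge> 1" using ar_pos assms by auto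
  have e: "Suc i + ar C y - 1 = i + ar C y" using py by simp
  have IH: "gam C (comp C x j y) (i + ar C y) B = comp C ?w j y"
    using Cons.IH[of "Suc i"] Cons.prems t e by simp
  have w: "?w \<in> elts C" using gam_typ[of x "Suc i" B] assms Cons.prems t by simp
  have iw: "inc C ?w j = inc C x j" "inc C ?w i = inc C x i" "i \<le> ar C ?w"
    using inc_gam_lt[of x "Suc i" B] assms Cons.prems t i by auto
  have "gam C (comp C x j y) (i + ar C y - 1) (b # B) = comp C (comp C ?w j y) (i + ar C y - 1) b"
  proof -
    have "Suc (i + ar C y - 1) = i + ar C y" using py by simp
    thus ?thesis using IH by simp
  qed
  also have "\<dots> = comp C (comp C ?w i b) j y"
    using ax_par[of ?w y b j i] w assms t iw Cons.prems by auto
  finally show ?case by simp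
qed

lemma gam_seq:
  assumes "w \<in> elts C" "y \<in> elts C" "1 \<le> j" "j \<le> ar C w" "outc C y = inc C w j"
    "1 \<le> i" "i - 1 + length S = ar C y" "typd y i S"
  shows "comp C w j (gam C y i S) = gam C (comp C w j y) (j + i - 1) S"
  using assms(6-8)
proof (induction S arbitrary: i)
  case Nil
  then show ?case by simp
next
  case (Cons s S)
  have i: "1 \<le> i" "i \<le> ar C y" using Cons.prems by auto
  have t: "s \<in> elts C" "outc C s = inc C y i" "typd y (Suc i) S" using typd_Cons[OF i] Cons.prems by auto
  let ?y = "gam C y (Suc i) S"
  have y: "?y \<in> elts C" "outc C ?y = outc C y" using gam_typ[of y "Suc i" S] assms Cons.prems t by auto
  have iy: "inc C ?y i = inc C y i" "i \<le> ar C ?y"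
    using inc_gam_lt[of y "Suc i" S] assms Cons.prems t i by auto
  have IH: "comp C w j ?y = gam C (comp C w j y) (j + i) S"
    using Cons.IH[of "Suc i"] Cons.prems t by simp
  have "comp C w j (gam C y i (s # S)) = comp C w j (comp C ?y i s)" by simp
  also have "\<dots> = comp C (comp C w j ?y) (j + i - 1) s"
    using ax_seq[of w ?y s j i] assms y iy t i by auto
  also have "\<dots> = gam C (comp C w j y) (j + i - 1) (s # S)"
    using IH assms by simp
  finally show ?case .
qed

lemma gamma_assoc:
  assumes x: "x \<in> elts C" and y: "y \<in> elts C" and j: "j = Suc (length A)"
    and len: "length A + 1 + length B = ar C x" and lS: "length S = ar C y"
    and yc: "outc C y = inc C x j"
    and tA: "list_all2 (\<lambda>r c. r \<in> elts C \<and> outc C r = c) A (take (j-1) (incs x))"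
    and tS: "typd y 1 S" and tB: "typd x (Suc j) B"
  shows "gam C x 1 (A @ [gam C y 1 S] @ B) = gam C (comp C x j y) 1 (A @ S @ B)"
proof -
  let ?w = "gam C x (Suc j) B"
  have w: "?w \<in> elts C" using gam_typ[of x "Suc j" B] x len tB j by simp
  have iw: "inc C ?w j = inc C x j" "j \<le> ar C ?w"
    using inc_gam_lt[of x "Suc j" B] x len tB j by auto
  have py: "ar C y \<ge> 1" using ar_pos y by auto
  have "gam C x 1 (A @ [gam C y 1 S] @ B) = gam C (gam C x j (gam C y 1 S # B)) 1 A"
    using gam_append[of C x 1 A] j by simp
  also have "gam C x j (gam C y 1 S # B) = comp C ?w j (gam C y 1 S)" by simp
  also have "\<dots> = gam C (comp C ?w j y) j S"
    using gam_seq[of ?w y j 1 S] w y iw yc lS tS j by simp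
  also have "comp C ?w j y = gam C (comp C x j y) (j + ar C y) B"
    using gam_par[of x y j "Suc j" B] x y j len yc tB py by simp
  finally have L: "gam C x 1 (A @ [gam C y 1 S] @ B) = gam C (gam C (gam C (comp C x j y) (j + ar C y) B) j S) 1 A" .
  have "gam C (comp C x j y) 1 (A @ S @ B) = gam C (gam C (comp C x j y) j (S @ B)) 1 A"
    using gam_append[of C "comp C x j y" 1 A] j by simp
  also have "gam C (comp C x j y) j (S @ B) = gam C (gam C (comp C x j y) (j + ar C y) B) j S"
    using gam_append[of C "comp C x j y" j S] lS by simp
  finally show ?thesis using L by simp
qed

end


definition rt :: "'a col_operad \<Rightarrow> nat \<Rightarrow> 'a tree \<Rightarrow> 'a" where
  "rt C c n = (case n of Node y vs \<Rightarrow> if outc C y = c then y else unit C c | Leaf \<Rightarrow> unit C c)"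
definition ch :: "'a col_operad \<Rightarrow> nat \<Rightarrow> 'a tree \<Rightarrow> 'a tree list" where
  "ch C c n = (case n of Node y vs \<Rightarrow> if outc C y = c then vs else [n] | Leaf \<Rightarrow> [Leaf])"

definition okc :: "'a col_operad \<Rightarrow> nat \<Rightarrow> 'a tree \<Rightarrow> bool" where
  "okc C d t \<longleftrightarrow> (\<forall>y us. t = Node y us \<longrightarrow> outc C y \<noteq> d)"

lemma list_all2_concat': "list_all2 (list_all2 P) xss yss \<Longrightarrow> list_all2 P (concat xss) (concat yss)"
  by (induction rule: list_all2_induct) (auto intro: list_all2_appendI)

lemma sumlist_concat: "sum_list (concat xss) = sum_list (map sum_list (xss :: nat list list))"
  by (induction xss) auto

lemma ftree_Node: "ftree C (Node x ts) \<longleftrightarrow> x \<in> elts C \<and> ar C x \<noteq> 1 \<and> length ts = ar C x \<and> (\<forall>t\<in>set ts. ftree C t)"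
  by (auto elim: ftree.cases intro: ftree.intros)

lemma anti_Node: "anti C (Node x ts) \<longleftrightarrow> x \<in> elts C \<and> ar C x \<noteq> 1 \<and> length ts = ar C x \<and>
   (\<forall>i<length ts. anti C (ts!i) \<and> okc C (inc C x (Suc i)) (ts!i))"
  by (auto elim: anti.cases intro: anti.intros simp: okc_def)

lemma anti_ftree: "anti C t \<Longrightarrow> ftree C t"
  by (induction rule: anti.induct) (auto simp: ftree_Node in_set_conv_nth ftree_leaf)

context cop begin

definition M :: "'a \<Rightarrow> 'a tree list \<Rightarrow> 'a tree" where
  "M x ns = Node (gam C x 1 (map2 (rt C) (incs x) ns)) (concat (map2 (ch C) (incs x) ns))"

fun nf :: "'a tree \<Rightarrow> 'a tree" where
  "nf Leaf = Leaf"
| "nf (Node x ts) = M x (map nf ts)"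

lemma incs_in: "x \<in> elts C \<Longrightarrow> c \<in> set (incs x) \<Longrightarrow> c \<in> {1..k}"
  using ax_elt[of x] by (auto simp: incs_def)

lemma rt_typ: "c \<in> {1..k} \<Longrightarrow> ftree C n \<Longrightarrow> rt C c n \<in> elts C \<and> outc C (rt C c n) = c"
  by (cases n) (auto simp: rt_def ftree_Node ax_unit)

lemma ch_props: "c \<in> {1..k} \<Longrightarrow> ftree C n \<Longrightarrow>
   length (ch C c n) = ar C (rt C c n) \<and> (\<forall>t\<in>set (ch C c n). ftree C t) \<and>
   sum_list (map leaves (ch C c n)) = leaves n"
  by (cases n) (auto simp: rt_def ch_def ftree_Node ax_unit)

lemma typ_rts: "length cs = length ns \<Longrightarrow> set cs \<subseteq> {1..k} \<Longrightarrow> \<forall>n\<in>set ns. ftree C n \<Longrightarrow>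
   list_all2 (\<lambda>r c. r \<in> elts C \<and> outc C r = c) (map2 (rt C) cs ns) cs"
proof (induction cs arbitrary: ns)
  case Nil thus ?case by simp
next
  case (Cons c cs) thus ?case using rt_typ by (cases ns) auto
qed

lemma M_props:
  assumes x: "x \<in> elts C" "ar C x \<noteq> 1" and l: "length ns = ar C x" and f: "\<forall>n\<in>set ns. ftree C n"
  shows "ftree C (M x ns) \<and> leaves (M x ns) = sum_list (map leaves ns)"
proof -
  let ?rs = "map2 (rt C) (incs x) ns"
  have sub: "set (incs x) \<subseteq> {1..k}" using incs_in x by blast
  have td: "typd x 1 ?rs" unfolding typd_def using typ_rts[OF _ sub f] l by simp
  have g: "gam C x 1 ?rs \<in> elts C \<and> incs (gam C x 1 ?rs) = concat (map incs ?rs)"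
    using gam_typ[of x 1 ?rs] x l td by simp
  have P: "\<forall>p\<in>set (zip (incs x) ns). length (ch C (fst p) (snd p)) = ar C (rt C (fst p) (snd p)) \<and>
      (\<forall>t\<in>set (ch C (fst p) (snd p)). ftree C t) \<and>
      sum_list (map leaves (ch C (fst p) (snd p))) = leaves (snd p) \<and> ar C (rt C (fst p) (snd p)) \<ge> 1"
  proof
    fix p assume pz: "p \<in> set (zip (incs x) ns)"
    obtain a b where pab: "p = (a,b)" by (cases p)
    have "a \<in> set (incs x)" "b \<in> set ns" using pz pab by (auto dest: set_zip_leftD set_zip_rightD)
    hence "fst p \<in> {1..k}" "ftree C (snd p)" using sub f pab by auto
    thus "length (ch C (fst p) (snd p)) = ar C (rt C (fst p) (snd p)) \<and>
      (\<forall>t\<in>set (ch C (fst p) (snd p)). ftree C t) \<and>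
      sum_list (map leaves (ch C (fst p) (snd p))) = leaves (snd p) \<and> ar C (rt C (fst p) (snd p)) \<ge> 1"
      using ch_props rt_typ ar_pos by blast
  qed
  have len: "length (concat (map2 (ch C) (incs x) ns)) = ar C (gam C x 1 ?rs)"
  proof -
    have "ar C (gam C x 1 ?rs) = length (concat (map incs ?rs))" using g by (metis length_incs)
    also have "\<dots> = sum_list (map (\<lambda>p. ar C (rt C (fst p) (snd p))) (zip (incs x) ns))"
      unfolding length_concat map_map by (intro arg_cong[where f=sum_list] map_cong) (auto split: prod.splits)
    also have "\<dots> = sum_list (map (\<lambda>p. length (ch C (fst p) (snd p))) (zip (incs x) ns))"
      using P by (intro arg_cong[where f=sum_list] map_cong) auto
    also have "\<dots> = length (concat (map2 (ch C) (incs x) ns))"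
      unfolding length_concat map_map by (intro arg_cong[where f=sum_list] map_cong) (auto split: prod.splits)
    finally show ?thesis by simp
  qed
  have ge: "ar C (gam C x 1 ?rs) \<ge> ar C x"
  proof -
    have "ar C (gam C x 1 ?rs) = sum_list (map (\<lambda>p. ar C (rt C (fst p) (snd p))) (zip (incs x) ns))"
    proof -
      have "ar C (gam C x 1 ?rs) = length (concat (map incs ?rs))" using g by (metis length_incs)
      thus ?thesis unfolding length_concat map_map
        by (simp only:) (intro arg_cong[where f=sum_list] map_cong, auto split: prod.splits)
    qed
    also have "\<dots> \<ge> sum_list (map (\<lambda>p. 1) (zip (incs x) ns))"
      using P by (intro sum_list_mono) auto
    finally show ?thesis using l by (simp add: sum_list_triv)
  qed
  have "ar C x \<ge> 1" using ar_pos x by auto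
  hence ne1: "ar C (gam C x 1 ?rs) \<noteq> 1" using ge x by linarith
  have ft: "\<forall>t\<in>set (concat (map2 (ch C) (incs x) ns)). ftree C t" using P by auto
  have lv: "sum_list (map leaves (concat (map2 (ch C) (incs x) ns))) = sum_list (map leaves ns)"
  proof -
    have "sum_list (map leaves (concat (map2 (ch C) (incs x) ns)))
        = sum_list (map (\<lambda>p. sum_list (map leaves (ch C (fst p) (snd p)))) (zip (incs x) ns))"
      unfolding map_concat sumlist_concat map_map
      by (intro arg_cong[where f=sum_list] map_cong) (auto split: prod.splits)
    also have "\<dots> = sum_list (map (\<lambda>p. leaves (snd p)) (zip (incs x) ns))"
      using P by (intro arg_cong[where f=sum_list] map_cong) auto
    also have "\<dots> = sum_list (map leaves (map snd (zip (incs x) ns)))" by (simp only: map_map Fun.comp_def)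
    also have "\<dots> = sum_list (map leaves ns)" using l by simp
    finally show ?thesis .
  qed
  show ?thesis unfolding M_def using g len ne1 ft lv by (auto simp: ftree_Node)
qed

lemma nf_props: "ftree C t \<Longrightarrow> ftree C (nf t) \<and> leaves (nf t) = leaves t"
proof (induction t)
  case Leaf thus ?case by simp
next
  case (Node x ts)
  have h: "x \<in> elts C" "ar C x \<noteq> 1" "length ts = ar C x" "\<forall>t\<in>set ts. ftree C t" using Node.prems[unfolded ftree_Node] by auto
  hence IH: "\<forall>t\<in>set ts. ftree C (nf t) \<and> leaves (nf t) = leaves t" using Node.IH by blast
  have "ftree C (M x (map nf ts)) \<and> leaves (M x (map nf ts)) = sum_list (map leaves (map nf ts))"
    using M_props[of x "map nf ts"] h IH by auto
  moreover have "map (leaves \<circ> nf) ts = map leaves ts" using IH by auto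
  ultimately show ?case by simp
qed

lemma anti_Node2: "anti C (Node x ts) \<longleftrightarrow> x \<in> elts C \<and> ar C x \<noteq> 1 \<and> length ts = ar C x \<and>
   list_all2 (\<lambda>t d. anti C t \<and> okc C d t) ts (incs x)"
  unfolding anti_Node list_all2_conv_all_nth by (auto simp: nth_incs)

lemma okc_rt_ch: "list_all2 (\<lambda>t d. okc C d t) ts cs \<Longrightarrow>
   map2 (rt C) cs ts = map (unit C) cs \<and> concat (map2 (ch C) cs ts) = ts"
proof (induction rule: list_all2_induct)
  case Nil thus ?case by simp
next
  case (Cons t ts d cs)
  have "rt C d t = unit C d \<and> ch C d t = [t]" using Cons.hyps(1)
    by (cases t) (auto simp: okc_def rt_def ch_def)
  thus ?case using Cons.IH by simp
qed

lemma gam_units_aux: "x \<in> elts C \<Longrightarrow> 1 \<le> i \<Longrightarrow> i - 1 + n = ar C x \<Longrightarrow>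
   gam C x i (map (unit C) (drop (i-1) (incs x))) = x"
proof (induction n arbitrary: i)
  case 0
  hence "drop (i-1) (incs x) = []" by simp
  thus ?case by simp
next
  case (Suc n)
  have i: "1 \<le> i" "i \<le> ar C x" using Suc.prems by auto
  have "drop (i-1) (incs x) = incs x ! (i-1) # drop (Suc (i-1)) (incs x)"
    by (rule Cons_nth_drop_Suc[symmetric]) (use i in simp)
  also have "Suc (i-1) = i" using i by simp
  finally have d: "drop (i-1) (incs x) = inc C x i # drop (Suc i - 1) (incs x)" using i by (simp add: nth_incs)
  have "gam C x (Suc i) (map (unit C) (drop (Suc i - 1) (incs x))) = x"
    using Suc.IH[of "Suc i"] Suc.prems by simp
  thus ?case using d ax_unitr[of x i] Suc.prems i by simp
qed

lemma gam_units: "x \<in> elts C \<Longrightarrow> gam C x 1 (map (unit C) (incs x)) = x"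
  using gam_units_aux[of x 1 "ar C x"] by simp

lemma nf_anti: "anti C t \<Longrightarrow> nf t = t"
proof (induction t)
  case Leaf thus ?case by simp
next
  case (Node x ts)
  have h: "x \<in> elts C" "length ts = ar C x" "list_all2 (\<lambda>t d. anti C t \<and> okc C d t) ts (incs x)"
    using Node.prems anti_Node2 by auto
  have a: "\<forall>t\<in>set ts. anti C t" using h(3) by (auto simp: list_all2_conv_all_nth in_set_conv_nth)
  hence "map nf ts = ts" using Node.IH by (simp add: map_idI)
  moreover have "list_all2 (\<lambda>t d. okc C d t) ts (incs x)" using h(3) list_all2_mono by fastforce
  ultimately show ?case using okc_rt_ch gam_units h(1) by (simp add: M_def)
qed

lemma incs_unit: "c \<in> {1..k} \<Longrightarrow> incs (unit C c) = [c]"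
  using ax_unit[of c] by (simp add: incs_def)

lemma anti_M:
  assumes x: "x \<in> elts C" "ar C x \<noteq> 1" and l: "length ns = ar C x" and a: "\<forall>n\<in>set ns. anti C n"
  shows "anti C (M x ns)"
proof -
  let ?rs = "map2 (rt C) (incs x) ns"
  have f: "\<forall>n\<in>set ns. ftree C n" using a anti_ftree by blast
  have ft: "ftree C (M x ns)" using M_props[OF x l f] by simp
  have sub: "set (incs x) \<subseteq> {1..k}" using incs_in x by blast
  have td: "typd x 1 ?rs" unfolding typd_def using typ_rts[OF _ sub f] l by simp
  have g: "incs (gam C x 1 ?rs) = concat (map incs ?rs)"
    using gam_typ[of x 1 ?rs] x l td by simp
  have el: "list_all2 (\<lambda>t d. anti C t \<and> okc C d t) (ch C c n) (incs (rt C c n))"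
    if "c \<in> {1..k}" "anti C n" for c n
  proof (cases n)
    case Leaf thus ?thesis using that incs_unit by (simp add: ch_def rt_def okc_def anti.intros)
  next
    case (Node y vs)
    show ?thesis
    proof (cases "outc C y = c")
      case True thus ?thesis using Node that anti_Node2 by (simp add: ch_def rt_def)
    next
      case False thus ?thesis using Node that incs_unit by (simp add: ch_def rt_def okc_def)
    qed
  qed
  have "list_all2 (list_all2 (\<lambda>t d. anti C t \<and> okc C d t)) (map2 (ch C) (incs x) ns) (map incs ?rs)"
    unfolding list_all2_map1 list_all2_map2 map_map list_all2_same
  proof
    fix p assume pz: "p \<in> set (zip (incs x) ns)"
    obtain c n where pab: "p = (c,n)" by (cases p)
    have "c \<in> set (incs x)" "n \<in> set ns" using pz pab by (auto dest: set_zip_leftD set_zip_rightD)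
    thus "list_all2 (\<lambda>t d. anti C t \<and> okc C d t) (case p of (x, xa) \<Rightarrow> ch C x xa) ((incs \<circ> (\<lambda>(x, y). rt C x y)) p)"
      using el sub a pab by auto
  qed
  hence "list_all2 (\<lambda>t d. anti C t \<and> okc C d t) (concat (map2 (ch C) (incs x) ns)) (incs (gam C x 1 ?rs))"
    using g list_all2_concat' by fastforce
  thus ?thesis using ft unfolding M_def anti_Node2 ftree_Node by simp
qed

lemma anti_nf: "ftree C t \<Longrightarrow> anti C (nf t)"
proof (induction t)
  case Leaf thus ?case by (simp add: anti.intros)
next
  case (Node x ts)
  have h: "x \<in> elts C" "ar C x \<noteq> 1" "length ts = ar C x" "\<forall>t\<in>set ts. ftree C t"
    using Node.prems[unfolded ftree_Node] by auto
  thus ?case using anti_M[of x "map nf ts"] Node.IH by auto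
qed

end


inductive rw :: "'a col_operad \<Rightarrow> 'a tree \<Rightarrow> 'a tree \<Rightarrow> bool" for C where
  rw_root: "outc C y = inc C x (Suc (length A)) \<Longrightarrow>
    rw C (Node x (A @ [Node y us] @ B)) (Node (comp C x (Suc (length A)) y) (A @ us @ B))"
| rw_child: "rw C c c' \<Longrightarrow> rw C (Node x (A @ [c] @ B)) (Node x (A @ [c'] @ B))"

lemma rw_leaves: "rw C s s' \<Longrightarrow> leaves s' = leaves s"
  by (induction rule: rw.induct) auto

lemma length_graft_list[simp]: "length (graft_list ts i s) = length ts"
  by (induction ts arbitrary: i) auto

lemma graft_list_append: "1 \<le> i \<Longrightarrow> graft_list (A @ R) i s =
  (if i \<le> sum_list (map leaves A) then graft_list A i s @ R
   else A @ graft_list R (i - sum_list (map leaves A)) s)"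
proof (induction A arbitrary: i)
  case Nil thus ?case by simp
next
  case (Cons a A)
  show ?case
  proof (cases "i \<le> leaves a")
    case True thus ?thesis by simp
  next
    case False
    hence "1 \<le> i - leaves a" by simp
    thus ?thesis using Cons.IH[of "i - leaves a"] False by (auto simp: algebra_simps)
  qed
qed

lemma graft_list_single: "graft_list [c] i s = (if i \<le> leaves c then [graft c i s] else [c])"
  by simp

lemma rw_graft: "rw C s s' \<Longrightarrow> 1 \<le> i \<Longrightarrow> rw C (graft s i t) (graft s' i t)"
proof (induction arbitrary: i rule: rw.induct)
  case (rw_root y x A us B)
  let ?a = "sum_list (map leaves A)" and ?u = "sum_list (map leaves us)"
  show ?case
  proof (cases "i \<le> ?a")
    case True
    have "rw C (Node x (graft_list A i t @ [Node y us] @ B)) (Node (comp C x (Suc (length (graft_list A i t))) y) (graft_list A i t @ us @ B))"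
      by (rule rw.rw_root) (use rw_root.hyps in simp)
    thus ?thesis using True rw_root.prems by (simp add: graft_list_append)
  next
    case False
    hence i': "1 \<le> i - ?a" by simp
    show ?thesis
    proof (cases "i - ?a \<le> ?u")
      case True
      have "rw C (Node x (A @ [Node y (graft_list us (i - ?a) t)] @ B)) (Node (comp C x (Suc (length A)) y) (A @ graft_list us (i - ?a) t @ B))"
        by (rule rw.rw_root) (use rw_root.hyps in simp)
      thus ?thesis using True False i' rw_root.prems by (simp add: graft_list_append)
    next
      case F2: False
      have "rw C (Node x (A @ [Node y us] @ graft_list B (i - ?a - ?u) t)) (Node (comp C x (Suc (length A)) y) (A @ us @ graft_list B (i - ?a - ?u) t))"
        by (rule rw.rw_root) (use rw_root.hyps in simp)
      moreover have "1 \<le> i - ?a - ?u" using F2 by simp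
      ultimately show ?thesis using F2 False i' rw_root.prems by (simp add: graft_list_append)
    qed
  qed
next
  case (rw_child c c' x A B)
  let ?a = "sum_list (map leaves A)" and ?u = "leaves c"
  have lc: "leaves c' = leaves c" using rw_child.hyps rw_leaves by blast
  show ?case
  proof (cases "i \<le> ?a")
    case True
    have "rw C (Node x (graft_list A i t @ [c] @ B)) (Node x (graft_list A i t @ [c'] @ B))"
      by (rule rw.rw_child) (use rw_child.hyps in simp)
    thus ?thesis using True rw_child.prems by (simp add: graft_list_append)
  next
    case False
    hence i': "1 \<le> i - ?a" by simp
    show ?thesis
    proof (cases "i - ?a \<le> ?u")
      case True
      have "rw C (Node x (A @ [graft c (i - ?a) t] @ B)) (Node x (A @ [graft c' (i - ?a) t] @ B))"
        by (rule rw.rw_child) (use rw_child.IH i' in simp)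
      thus ?thesis using True False i' rw_child.prems lc by (simp add: graft_list_append)
    next
      case F2: False
      have "rw C (Node x (A @ [c] @ graft_list B (i - ?a - ?u) t)) (Node x (A @ [c'] @ graft_list B (i - ?a - ?u) t))"
        by (rule rw.rw_child) (use rw_child.hyps in simp)
      moreover have "1 \<le> i - ?a - ?u" using F2 by simp
      ultimately show ?thesis using F2 False i' rw_child.prems lc by (simp add: graft_list_append)
    qed
  qed
qed

lemma rws_graft: "(rw C)\<^sup>*\<^sup>* s s' \<Longrightarrow> 1 \<le> i \<Longrightarrow> (rw C)\<^sup>*\<^sup>* (graft s i t) (graft s' i t)"
proof (induction rule: rtranclp_induct)
  case base show ?case by simp
next
  case (step y z)
  have "rw C (graft y i t) (graft z i t)" by (rule rw_graft[OF step(2) step.prems])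
  thus ?case using step.IH step.prems by (meson rtranclp.rtrancl_into_rtrancl)
qed

lemma rws_child: "(rw C)\<^sup>*\<^sup>* c c' \<Longrightarrow> (rw C)\<^sup>*\<^sup>* (Node x (A @ [c] @ B)) (Node x (A @ [c'] @ B))"
proof (induction rule: rtranclp_induct)
  case base show ?case by simp
next
  case (step y z)
  have "rw C (Node x (A @ [y] @ B)) (Node x (A @ [z] @ B))" by (rule rw_child[OF step(2)])
  thus ?case using step.IH by (meson rtranclp.rtrancl_into_rtrancl)
qed

lemma rws_children: "list_all2 ((rw C)\<^sup>*\<^sup>*) ts ts' \<Longrightarrow> (rw C)\<^sup>*\<^sup>* (Node x (A @ ts)) (Node x (A @ ts'))"
proof (induction arbitrary: A rule: list_all2_induct)
  case Nil thus ?case by simp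
next
  case (Cons t ts t' ts')
  have "(rw C)\<^sup>*\<^sup>* (Node x (A @ [t] @ ts)) (Node x (A @ [t'] @ ts))" by (rule rws_child[OF Cons.hyps(1)])
  moreover have "(rw C)\<^sup>*\<^sup>* (Node x ((A @ [t']) @ ts)) (Node x ((A @ [t']) @ ts'))" using Cons.IH by blast
  ultimately show ?case by simp
qed

context cop begin

lemma ftree_rw: "rw C s s' \<Longrightarrow> ftree C s \<Longrightarrow> ftree C s'"
proof (induction rule: rw.induct)
  case (rw_root y x A us B)
  let ?j = "Suc (length A)"
  have h: "x \<in> elts C" "ar C x \<noteq> 1" "length A + 1 + length B = ar C x" "\<forall>t\<in>set A. ftree C t"
     "\<forall>t\<in>set B. ftree C t" "y \<in> elts C" "ar C y \<noteq> 1" "length us = ar C y" "\<forall>t\<in>set us. ftree C t"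
    using rw_root.prems by (auto simp: ftree_Node)
  have c: "comp C x ?j y \<in> elts C \<and> ar C (comp C x ?j y) = ar C x + ar C y - 1"
    using ax_comp[of x y ?j] h rw_root.hyps by auto
  have "ar C x \<ge> 1" "ar C y \<ge> 1" using ar_pos h by auto
  thus ?case using c h by (auto simp: ftree_Node)
next
  case (rw_child c c' x A B)
  thus ?case using rw_leaves by (auto simp: ftree_Node)
qed

lemma M_assoc:
  assumes x: "x \<in> elts C" and y: "y \<in> elts C" and j: "j = Suc (length ns)"
    and len: "length ns + 1 + length ns' = ar C x" and lm: "length ms = ar C y"
    and yc: "outc C y = inc C x j"
    and f: "\<forall>n\<in>set ns. ftree C n" "\<forall>n\<in>set ms. ftree C n" "\<forall>n\<in>set ns'. ftree C n"
  shows "M x (ns @ [M y ms] @ ns') = M (comp C x j y) (ns @ ms @ ns')"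
proof -
  let ?cA = "take (j-1) (incs x)" and ?c = "inc C x j" and ?cB = "drop j (incs x)"
  have jx: "1 \<le> j" "j \<le> ar C x" using j len by auto
  have sp: "incs x = ?cA @ [?c] @ ?cB"
  proof -
    have "drop (j-1) (incs x) = incs x ! (j-1) # drop (Suc (j-1)) (incs x)"
      by (rule Cons_nth_drop_Suc[symmetric]) (use jx in simp)
    hence "drop (j-1) (incs x) = ?c # ?cB" using jx by (simp add: nth_incs)
    thus ?thesis by (metis append_Cons append_Nil append_take_drop_id)
  qed
  have subx: "set (incs x) \<subseteq> {1..k}" using incs_in x by blast
  hence subA: "set ?cA \<subseteq> {1..k}" and subB: "set ?cB \<subseteq> {1..k}" by (auto dest: in_set_takeD in_set_dropD)
  have suby: "set (incs y) \<subseteq> {1..k}" using incs_in y by blast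
  have lA: "length ?cA = length ns" using j len by simp
  have lB: "length ?cB = length ns'" using j len by simp
  let ?RS = "map2 (rt C) (incs y) ms"
  have tS: "typd y 1 ?RS" unfolding typd_def using typ_rts[OF _ suby f(2)] lm by simp
  have gy: "gam C y 1 ?RS \<in> elts C \<and> outc C (gam C y 1 ?RS) = outc C y"
    using gam_typ[of y 1 ?RS] y lm tS by simp
  have rtM: "rt C ?c (M y ms) = gam C y 1 ?RS" using gy yc by (simp add: M_def rt_def)
  have chM: "ch C ?c (M y ms) = concat (map2 (ch C) (incs y) ms)" using gy yc by (simp add: M_def ch_def)
  have ic: "incs (comp C x j y) = ?cA @ incs y @ ?cB" using incs_comp[of x y j] x y jx yc by simp
  have tB: "typd x (Suc j) (map2 (rt C) ?cB ns')"
    unfolding typd_def using typ_rts[OF _ subB f(3)] lB by simp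
  have tA: "list_all2 (\<lambda>r c. r \<in> elts C \<and> outc C r = c) (map2 (rt C) ?cA ns) ?cA"
    using typ_rts[OF _ subA f(1)] lA by simp
  have L: "gam C x 1 (map2 (rt C) ?cA ns @ [gam C y 1 ?RS] @ map2 (rt C) ?cB ns')
        = gam C (comp C x j y) 1 (map2 (rt C) ?cA ns @ ?RS @ map2 (rt C) ?cB ns')"
    by (rule gamma_assoc) (use x y j len lm yc tS tB lA tA in auto)
  have z1: "map2 (rt C) (?cA @ [?c] @ ?cB) (ns @ [M y ms] @ ns') = map2 (rt C) ?cA ns @ [rt C ?c (M y ms)] @ map2 (rt C) ?cB ns'"
    using lA lB by simp
  have z2: "map2 (ch C) (?cA @ [?c] @ ?cB) (ns @ [M y ms] @ ns') = map2 (ch C) ?cA ns @ [ch C ?c (M y ms)] @ map2 (ch C) ?cB ns'"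
    using lA lB by simp
  have z3: "map2 (rt C) (?cA @ incs y @ ?cB) (ns @ ms @ ns') = map2 (rt C) ?cA ns @ ?RS @ map2 (rt C) ?cB ns'"
    using lA lB lm by simp
  have z4: "map2 (ch C) (?cA @ incs y @ ?cB) (ns @ ms @ ns') = map2 (ch C) ?cA ns @ map2 (ch C) (incs y) ms @ map2 (ch C) ?cB ns'"
    using lA lB lm by simp
  have "M x (ns @ [M y ms] @ ns') = Node (gam C x 1 (map2 (rt C) (incs x) (ns @ [M y ms] @ ns'))) (concat (map2 (ch C) (incs x) (ns @ [M y ms] @ ns')))"
    by (rule M_def)
  also have "\<dots> = Node (gam C x 1 (map2 (rt C) ?cA ns @ [rt C ?c (M y ms)] @ map2 (rt C) ?cB ns'))
      (concat (map2 (ch C) ?cA ns @ [ch C ?c (M y ms)] @ map2 (ch C) ?cB ns'))"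
    using z1 z2 unfolding sp[symmetric] by simp
  also have "\<dots> = Node (gam C (comp C x j y) 1 (map2 (rt C) ?cA ns @ ?RS @ map2 (rt C) ?cB ns'))
      (concat (map2 (ch C) ?cA ns @ map2 (ch C) (incs y) ms @ map2 (ch C) ?cB ns'))"
    using L rtM chM by simp
  also have "\<dots> = M (comp C x j y) (ns @ ms @ ns')"
    unfolding M_def ic using z3 z4 by simp
  finally show ?thesis .
qed

lemma rw_nf: "rw C s s' \<Longrightarrow> ftree C s \<Longrightarrow> nf s = nf s'"
proof (induction rule: rw.induct)
  case (rw_root y x A us B)
  have h: "x \<in> elts C" "ar C x \<noteq> 1" "length A + 1 + length B = ar C x" "\<forall>t\<in>set A. ftree C t"
     "\<forall>t\<in>set B. ftree C t" "y \<in> elts C" "ar C y \<noteq> 1" "length us = ar C y" "\<forall>t\<in>set us. ftree C t"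
    using rw_root.prems by (auto simp: ftree_Node)
  have "M x (map nf A @ [M y (map nf us)] @ map nf B) = M (comp C x (Suc (length A)) y) (map nf A @ map nf us @ map nf B)"
    by (rule M_assoc) (use h rw_root.hyps nf_props in auto)
  thus ?case by simp
next
  case (rw_child c c' x A B)
  thus ?case by (auto simp: ftree_Node)
qed

lemma rws_nf: "(rw C)\<^sup>*\<^sup>* s s' \<Longrightarrow> ftree C s \<Longrightarrow> nf s = nf s'"
proof (induction rule: rtranclp_induct)
  case base thus ?case by simp
next
  case (step t u)
  have "ftree C t" using step.hyps(1) step.prems
    by (induction rule: rtranclp_induct) (auto intro: ftree_rw)
  thus ?case using step rw_nf by auto
qed

lemma reach_M:
  assumes x: "x \<in> elts C"
  shows "length A + length ns = ar C x \<Longrightarrow> \<forall>n\<in>set ns. ftree C n \<Longrightarrow>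
    (rw C)\<^sup>*\<^sup>* (Node x (A @ ns)) (Node (gam C x (Suc (length A)) (map2 (rt C) (drop (length A) (incs x)) ns))
        (A @ concat (map2 (ch C) (drop (length A) (incs x)) ns)))"
proof (induction ns arbitrary: A)
  case Nil thus ?case by simp
next
  case (Cons n ns)
  let ?i = "Suc (length A)"
  let ?cs = "drop ?i (incs x)"
  let ?w = "gam C x (Suc ?i) (map2 (rt C) ?cs ns)"
  let ?R = "concat (map2 (ch C) ?cs ns)"
  have IH: "(rw C)\<^sup>*\<^sup>* (Node x (A @ n # ns)) (Node ?w (A @ [n] @ ?R))"
    using Cons.IH[of "A @ [n]"] Cons.prems by simp
  have ix: "1 \<le> ?i" "?i \<le> ar C x" using Cons.prems by auto
  have "drop (length A) (incs x) = incs x ! length A # drop (Suc (length A)) (incs x)"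
    by (rule Cons_nth_drop_Suc[symmetric]) (use ix in simp)
  hence dr: "drop (length A) (incs x) = inc C x ?i # ?cs" using ix by (simp add: nth_incs)
  have sub: "set ?cs \<subseteq> {1..k}" using incs_in x by (auto dest: in_set_dropD)
  have td: "typd x (Suc ?i) (map2 (rt C) ?cs ns)"
    unfolding typd_def using typ_rts[OF _ sub] Cons.prems by simp
  have w: "?w \<in> elts C" using gam_typ[of x "Suc ?i" "map2 (rt C) ?cs ns"] x td Cons.prems by simp
  have iw: "inc C ?w ?i = inc C x ?i" "?i \<le> ar C ?w"
    using inc_gam_lt[of x "Suc ?i" "map2 (rt C) ?cs ns" ?i] x td Cons.prems by auto
  have goal: "(rw C)\<^sup>*\<^sup>* (Node x (A @ n # ns)) (Node (comp C ?w ?i (rt C (inc C x ?i) n)) (A @ ch C (inc C x ?i) n @ ?R))"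
  proof (cases "\<exists>y vs. n = Node y vs \<and> outc C y = inc C x ?i")
    case True
    then obtain y vs where n: "n = Node y vs" "outc C y = inc C x ?i" by blast
    have "rw C (Node ?w (A @ [Node y vs] @ ?R)) (Node (comp C ?w ?i y) (A @ vs @ ?R))"
      by (rule rw.rw_root) (use n iw in simp)
    thus ?thesis using IH n by (simp add: rt_def ch_def)
  next
    case False
    hence "rt C (inc C x ?i) n = unit C (inc C x ?i) \<and> ch C (inc C x ?i) n = [n]"
      by (cases n) (auto simp: rt_def ch_def)
    moreover have "comp C ?w ?i (unit C (inc C x ?i)) = ?w"
      using ax_unitr[of ?w ?i] w iw ix by simp
    ultimately show ?thesis using IH by simp
  qed
  show ?case using goal dr by simp
qed

lemma reach_nf: "ftree C s \<Longrightarrow> (rw C)\<^sup>*\<^sup>* s (nf s)"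
proof (induction s)
  case Leaf thus ?case by simp
next
  case (Node x ts)
  have h: "x \<in> elts C" "ar C x \<noteq> 1" "length ts = ar C x" "\<forall>t\<in>set ts. ftree C t"
    using Node.prems[unfolded ftree_Node] by auto
  have "list_all2 ((rw C)\<^sup>*\<^sup>*) ts (map nf ts)"
    using Node.IH h(4) by (auto simp: list_all2_conv_all_nth)
  hence 1: "(rw C)\<^sup>*\<^sup>* (Node x ts) (Node x (map nf ts))" using rws_children[of C ts _ x "[]"] by simp
  have 2: "(rw C)\<^sup>*\<^sup>* (Node x (map nf ts)) (M x (map nf ts))"
    using reach_M[of x "[]" "map nf ts"] h nf_props by (simp add: M_def)
  show ?case using 1 2 by simp
qed

end


fun grafts :: "'a tree \<Rightarrow> nat \<Rightarrow> 'a tree list \<Rightarrow> 'a tree" where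
  "grafts t i [] = t"
| "grafts t i (s # L) = graft (grafts t (Suc i) L) i s"

lemma grafts_append: "grafts t i (L1 @ L2) = grafts (grafts t (i + length L1) L2) i L1"
  by (induction L1 arbitrary: i) auto

lemma sum_leaves_rep[simp]: "sum_list (map leaves (replicate m Leaf)) = m"
  by (induction m) auto
lemma sum_rep1[simp]: "sum_list (replicate m (Suc 0)) = m"
  by (induction m) auto

lemma graft_nested: "1 \<le> i \<Longrightarrow> i \<le> leaves c \<Longrightarrow>
  graft (Node x (A @ [c] @ B)) (sum_list (map leaves A) + i) s = Node x (A @ [graft c i s] @ B)"
  by (simp add: graft_list_append)

lemma grafts_block: "length L = m \<Longrightarrow>
  grafts (Node x (A @ replicate m Leaf @ B)) (sum_list (map leaves A) + 1) L = Node x (A @ L @ B)"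
proof (induction L arbitrary: A m)
  case Nil thus ?case by simp
next
  case (Cons s L)
  then obtain m' where m: "m = Suc m'" "length L = m'" by auto
  have "grafts (Node x ((A @ [Leaf]) @ replicate m' Leaf @ B)) (sum_list (map leaves (A @ [Leaf])) + 1) L
     = Node x ((A @ [Leaf]) @ L @ B)" using Cons.IH m by blast
  hence IH: "grafts (Node x (A @ replicate m Leaf @ B)) (Suc (sum_list (map leaves A) + 1)) L = Node x (A @ [Leaf] @ L @ B)"
    using m by simp
  have "graft (Node x (A @ [Leaf] @ L @ B)) (sum_list (map leaves A) + 1) s = Node x (A @ [s] @ L @ B)"
    using graft_nested[of 1 Leaf x A "L @ B" s] by simp
  thus ?case using IH by simp
qed

lemma leaves_graft_ge: "1 \<le> leaves s \<Longrightarrow> leaves t \<le> leaves (graft t i s)"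
  and leaves_graft_list_ge: "1 \<le> leaves s \<Longrightarrow> sum_list (map leaves ts) \<le> sum_list (map leaves (graft_list ts i s))"
  by (induction t i s and ts i s rule: graft_graft_list.induct) auto

lemma leaves_grafts_ge: "\<forall>s\<in>set L. 1 \<le> leaves s \<Longrightarrow> leaves t \<le> leaves (grafts t i L)"
  by (induction L arbitrary: i) (auto intro: order_trans[OF _ leaves_graft_ge])

lemma grafts_nested: "1 \<le> i \<Longrightarrow> i - 1 + length L \<le> leaves c \<Longrightarrow> \<forall>s\<in>set L. 1 \<le> leaves s \<Longrightarrow>
  grafts (Node x (A @ [c] @ B)) (sum_list (map leaves A) + i) L = Node x (A @ [grafts c i L] @ B)"
proof (induction L arbitrary: i)
  case Nil thus ?case by simp
next
  case (Cons s L)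
  have IH: "grafts (Node x (A @ [c] @ B)) (sum_list (map leaves A) + Suc i) L = Node x (A @ [grafts c (Suc i) L] @ B)"
    using Cons.IH[of "Suc i"] Cons.prems by simp
  have "i \<le> leaves (grafts c (Suc i) L)" using Cons.prems leaves_grafts_ge[of L c "Suc i"] by simp
  thus ?case using IH graft_nested[of i "grafts c (Suc i) L" x A B s] Cons.prems by simp
qed

lemma graft_corolla: "1 \<le> i \<Longrightarrow> i \<le> n \<Longrightarrow>
  graft (Node x (replicate n Leaf)) i s = Node x (replicate (i-1) Leaf @ [s] @ replicate (n-i) Leaf)"
proof -
  assume i: "1 \<le> i" "i \<le> n"
  have n: "n = (i-1) + (1 + (n-i))" using i by simp
  have "replicate n Leaf = replicate (i-1) Leaf @ [Leaf] @ replicate (n-i) (Leaf :: 'a tree)"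
    by (subst n, simp only: replicate_add) simp
  moreover have "sum_list (map leaves (replicate (i-1) (Leaf :: 'a tree))) + 1 = i" using i by (simp add: sum_list_replicate)
  ultimately show ?thesis using graft_nested[of 1 Leaf x "replicate (i-1) Leaf" "replicate (n-i) Leaf" s] by simp
qed

lemma ftree_graft: "ftree C t \<Longrightarrow> ftree C s \<Longrightarrow> ftree C (graft t i s)"
proof (induction t arbitrary: i)
  case Leaf thus ?case by (simp add: ftree_leaf)
next
  case (Node x ts)
  have h: "x \<in> elts C" "ar C x \<noteq> 1" "length ts = ar C x" "\<forall>t\<in>set ts. ftree C t"
    using Node.prems(1)[unfolded ftree_Node] by auto
  have "\<forall>u\<in>set (graft_list us i s). ftree C u" if "set us \<subseteq> set ts" for us i
    using that
  proof (induction us arbitrary: i)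
    case Nil thus ?case by simp
  next
    case (Cons u us)
    have "ftree C u" "ftree C (graft u i s)" using Cons.prems h Node.IH Node.prems(2) by auto
    moreover have "\<forall>v\<in>set us. ftree C v" using Cons.prems h by auto
    ultimately show ?case using Cons.IH[of "i - leaves u"] Cons.prems by (simp split: if_split)
  qed
  hence "\<forall>u\<in>set (graft_list ts i s). ftree C u" by blast
  thus ?case using h by (simp add: ftree_Node)
qed

context cop begin

lemma nf_graft_left: "nf s = nf s' \<Longrightarrow> nf (graft t i s) = nf (graft t i s')"
proof (induction t arbitrary: i)
  case Leaf thus ?case by simp
next
  case (Node x ts)
  have "map nf (graft_list us i s) = map nf (graft_list us i s')" if "set us \<subseteq> set ts" for us i
    using that Node by (induction us arbitrary: i) auto
  thus ?case by simp
qed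

lemma ftree_leaves: "ftree C t \<Longrightarrow> 1 \<le> leaves t"
proof (induction t)
  case Leaf thus ?case by simp
next
  case (Node x ts)
  hence h: "x \<in> elts C" "ar C x \<noteq> 1" "length ts = ar C x" "\<forall>t\<in>set ts. ftree C t" by (auto simp: ftree_Node)
  have "ar C x \<ge> 1" using ar_pos h by auto
  then obtain t0 where "t0 \<in> set ts" using h(3) by (cases ts) auto
  hence "leaves t0 \<le> sum_list (map leaves ts)" by (simp add: member_le_sum_list)
  thus ?case using Node.IH \<open>t0 \<in> set ts\<close> h by fastforce
qed

lemma ftree_corolla: "x \<in> elts C \<Longrightarrow> ar C x \<noteq> 1 \<Longrightarrow> ftree C (corolla C x)"
  by (simp add: corolla_def ftree_Node ftree_leaf)

lemma env_ftree: "env_rel C s t \<Longrightarrow> ftree C s \<and> ftree C t"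
proof (induction rule: env_rel.induct)
  case (env_gen x y i)
  have c: "comp C x i y \<in> elts C \<and> ar C (comp C x i y) = ar C x + ar C y - 1"
    using ax_comp[of x y i] env_gen by auto
  have "ar C x \<ge> 1" "ar C y \<ge> 1" using ar_pos env_gen by auto
  hence "ar C (comp C x i y) \<noteq> 1" using c env_gen by auto
  hence "ftree C (corolla C (comp C x i y))" using c ftree_corolla by blast
  moreover have "ftree C (graft (corolla C x) i (corolla C y))"
    using ftree_graft ftree_corolla env_gen by blast
  ultimately show ?case by blast
next
  case (env_refl t) thus ?case by blast
next
  case (env_sym s t) thus ?case by blast
next
  case (env_trans s t u) thus ?case by blast
next
  case (env_left s s' t i) thus ?case using ftree_graft by blast
next
  case (env_right s s' t i) thus ?case using ftree_graft by blast
qed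

lemma env_nf: "env_rel C s t \<Longrightarrow> nf s = nf t"
proof (induction rule: env_rel.induct)
  case (env_gen x y i)
  let ?A = "replicate (i-1) (Leaf :: 'a tree)"
  have e: "graft (corolla C x) i (corolla C y) = Node x (?A @ [Node y (replicate (ar C y) Leaf)] @ replicate (ar C x - i) Leaf)"
    using graft_corolla[of i "ar C x" x] env_gen by (simp add: corolla_def)
  have r: "rw C (Node x (?A @ [Node y (replicate (ar C y) Leaf)] @ replicate (ar C x - i) Leaf))
     (Node (comp C x (Suc (length ?A)) y) (?A @ replicate (ar C y) Leaf @ replicate (ar C x - i) Leaf))"
    by (rule rw_root) (use env_gen in simp)
  have c: "ar C (comp C x i y) = ar C x + ar C y - 1" using ax_comp[of x y i] env_gen by auto
  have "ar C y \<ge> 1" using ar_pos env_gen by auto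
  hence "?A @ replicate (ar C y) Leaf @ replicate (ar C x - i) Leaf = replicate (ar C (comp C x i y)) Leaf"
    using c env_gen by (simp add: replicate_add[symmetric])
  hence r2: "rw C (graft (corolla C x) i (corolla C y)) (corolla C (comp C x i y))"
    using r e env_gen by (simp add: corolla_def)
  have "ftree C (graft (corolla C x) i (corolla C y))"
    using env_ftree[OF env_rel.env_gen[OF env_gen.hyps]] by simp
  thus ?case using rw_nf r2 by blast
next
  case (env_left s s' t i)
  thus ?case using nf_graft_left by blast
next
  case (env_right s s' t i)
  have fs: "ftree C s" "ftree C s'" using env_ftree env_right.hyps(1) by auto
  have a: "nf (graft u i t) = nf (graft (nf u) i t)" if "ftree C u" for u
  proof -
    have "(rw C)\<^sup>*\<^sup>* (graft u i t) (graft (nf u) i t)" using rws_graft reach_nf that env_right by blast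
    moreover have "ftree C (graft u i t)" using ftree_graft that env_right by blast
    ultimately show ?thesis using rws_nf by blast
  qed
  show ?case using a[OF fs(1)] a[OF fs(2)] env_right.IH by simp
qed auto

lemma grafts_env: "env_rel C a b \<Longrightarrow> \<forall>s\<in>set L. ftree C s \<Longrightarrow> 1 \<le> i \<Longrightarrow> i - 1 + length L \<le> leaves a \<Longrightarrow>
   env_rel C (grafts a i L) (grafts b i L)"
proof (induction L arbitrary: i)
  case Nil thus ?case by simp
next
  case (Cons s L)
  have IH: "env_rel C (grafts a (Suc i) L) (grafts b (Suc i) L)" using Cons by simp
  have "leaves a \<le> leaves (grafts a (Suc i) L)" using leaves_grafts_ge[of L a "Suc i"] Cons.prems ftree_leaves by auto
  hence "i \<le> leaves (grafts a (Suc i) L)" using Cons.prems by simp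
  thus ?case using env_right[OF IH] Cons.prems by simp
qed

lemma rw_env: "rw C s s' \<Longrightarrow> ftree C s \<Longrightarrow> env_rel C s s'"
proof (induction rule: rw.induct)
  case (rw_root y x A us B)
  let ?j = "Suc (length A)"
  have h: "x \<in> elts C" "ar C x \<noteq> 1" "length A + 1 + length B = ar C x" "\<forall>t\<in>set A. ftree C t"
     "\<forall>t\<in>set B. ftree C t" "y \<in> elts C" "ar C y \<noteq> 1" "length us = ar C y" "\<forall>t\<in>set us. ftree C t"
    using rw_root.prems by (auto simp: ftree_Node)
  have py: "ar C y \<ge> 1" using ar_pos h by auto
  let ?Lj = "replicate (length A) (Leaf :: 'a tree)" and ?Lr = "replicate (length B) (Leaf :: 'a tree)"
  have E: "graft (corolla C x) ?j (corolla C y) = Node x (?Lj @ [corolla C y] @ ?Lr)"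
    using graft_corolla[of ?j "ar C x" x] h by (simp add: corolla_def)
  have g: "env_rel C (graft (corolla C x) ?j (corolla C y)) (corolla C (comp C x ?j y))"
    by (rule env_gen) (use h rw_root.hyps in auto)
  have c: "ar C (comp C x ?j y) = ar C x + ar C y - 1" using ax_comp[of x y ?j] h rw_root.hyps by auto
  have fL: "\<forall>s\<in>set (A @ us @ B). ftree C s" using h by auto
  have lv: "leaves (Node x (?Lj @ [corolla C y] @ ?Lr)) = length A + ar C y + length B"
    by (simp add: corolla_def)
  have G: "env_rel C (grafts (Node x (?Lj @ [corolla C y] @ ?Lr)) 1 (A @ us @ B)) (grafts (corolla C (comp C x ?j y)) 1 (A @ us @ B))"
    using grafts_env[OF g[unfolded E] fL] lv h by simp
  have posL: "\<forall>s\<in>set us. 1 \<le> leaves s" using h ftree_leaves by auto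
  have s1: "grafts (Node x (?Lj @ [corolla C y] @ ?Lr)) 1 (A @ us @ B)
      = grafts (grafts (grafts (Node x (?Lj @ [corolla C y] @ ?Lr)) (?j + length us) B) ?j us) 1 A"
    using grafts_append[of _ 1 A "us @ B"] grafts_append[of _ ?j us B] by simp
  have "grafts (Node x ((?Lj @ [corolla C y]) @ replicate (length B) Leaf @ [])) (sum_list (map leaves (?Lj @ [corolla C y])) + 1) B
      = Node x ((?Lj @ [corolla C y]) @ B @ [])" by (rule grafts_block) simp
  hence s2: "grafts (Node x (?Lj @ [corolla C y] @ ?Lr)) (?j + length us) B = Node x (?Lj @ [corolla C y] @ B)"
    using h by (simp add: corolla_def)
  have "grafts (Node x (?Lj @ [corolla C y] @ B)) (sum_list (map leaves ?Lj) + 1) us = Node x (?Lj @ [grafts (corolla C y) 1 us] @ B)"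
    by (rule grafts_nested) (use h posL in \<open>auto simp: corolla_def\<close>)
  moreover have "grafts (corolla C y) 1 us = Node y us"
    using grafts_block[of us "ar C y" y "[]" "[]"] h by (simp add: corolla_def)
  ultimately have s3: "grafts (Node x (?Lj @ [corolla C y] @ B)) ?j us = Node x (?Lj @ [Node y us] @ B)" by simp
  have s4: "grafts (Node x (?Lj @ [Node y us] @ B)) 1 A = Node x (A @ [Node y us] @ B)"
    using grafts_block[of A "length A" x "[]" "[Node y us] @ B"] by simp
  have L: "grafts (Node x (?Lj @ [corolla C y] @ ?Lr)) 1 (A @ us @ B) = Node x (A @ [Node y us] @ B)"
    using s1 s2 s3 s4 by simp
  have R: "grafts (corolla C (comp C x ?j y)) 1 (A @ us @ B) = Node (comp C x ?j y) (A @ us @ B)"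
    using grafts_block[of "A @ us @ B" "ar C (comp C x ?j y)" "comp C x ?j y" "[]" "[]"] c h py
    by (simp add: corolla_def)
  show ?case using G L R by simp
next
  case (rw_child c c' x A B)
  have h: "x \<in> elts C" "ar C x \<noteq> 1" "length A + 1 + length B = ar C x" "ftree C c"
     "\<forall>t\<in>set A. ftree C t" "\<forall>t\<in>set B. ftree C t"
    using rw_child.prems by (auto simp: ftree_Node)
  have ct: "ftree C (Node x (A @ [Leaf] @ B))" using h by (auto simp: ftree_Node ftree_leaf)
  have "env_rel C (graft (Node x (A @ [Leaf] @ B)) (sum_list (map leaves A) + 1) c)
     (graft (Node x (A @ [Leaf] @ B)) (sum_list (map leaves A) + 1) c')"
    by (rule env_left) (use rw_child.IH h ct in auto)
  thus ?case using graft_nested[of 1 Leaf x A B] by simp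
qed

lemma env_self_nf: "ftree C s \<Longrightarrow> env_rel C s (nf s)"
proof -
  assume f: "ftree C s"
  have "(rw C)\<^sup>*\<^sup>* s t \<Longrightarrow> env_rel C s t \<and> ftree C t" for t
  proof (induction rule: rtranclp_induct)
    case base thus ?case using f env_refl by blast
  next
    case (step t u)
    thus ?case using rw_env ftree_rw env_trans by blast
  qed
  thus ?thesis using reach_nf f by blast
qed

end


lemma prod_list_count: "finite S \<Longrightarrow> set xs \<subseteq> S \<Longrightarrow>
  prod_list (map F xs) = (\<Prod>d\<in>S. (F d :: 'b :: comm_monoid_mult) ^ count_list xs d)"
proof (induction xs)
  case Nil thus ?case by simp
next
  case (Cons a xs)
  have a: "a \<in> S" using Cons.prems by simp
  have "(\<Prod>d\<in>S. F d ^ count_list (a # xs) d) = (\<Prod>d\<in>S. F d ^ count_list xs d * (if d = a then F d else 1))"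
    by (intro prod.cong) (auto simp: mult.commute)
  also have "\<dots> = (\<Prod>d\<in>S. F d ^ count_list xs d) * (\<Prod>d\<in>S. (if d = a then F d else 1))"
    by (rule prod.distrib)
  also have "(\<Prod>d\<in>S. (if d = a then F d else 1)) = F a" using a Cons.prems(1) by (simp add: prod.delta)
  finally show ?case using Cons by (simp add: mult.commute)
qed

context cop begin

definition AT where "AT n = {t. anti C t \<and> leaves t = n}"
definition ATc where "ATc c n = {t. anti C t \<and> leaves t = n \<and> (\<exists>x ts. t = Node x ts \<and> outc C x = c)}"

lemma card_Env: "card (Env C n) = card (AT n)"
proof -
  let ?f = "\<lambda>t. {u. env_rel C t u}"
  have cls: "{(s, t). env_rel C s t} `` {a} = ?f a" for a by auto
  have E: "Env C n = ?f ` AT n"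
  proof
    show "Env C n \<subseteq> ?f ` AT n"
    proof
      fix X assume "X \<in> Env C n"
      then obtain a where a: "ftree C a" "leaves a = n" "X = ?f a"
        unfolding Env_def quotient_def using cls by auto
      have e: "env_rel C a (nf a)" using env_self_nf a by blast
      have "?f a = ?f (nf a)" using e env_sym env_trans by blast
      moreover have "nf a \<in> AT n" using anti_nf nf_props a by (auto simp: AT_def)
      ultimately show "X \<in> ?f ` AT n" using a by blast
    qed
  next
    show "?f ` AT n \<subseteq> Env C n"
    proof
      fix X assume "X \<in> ?f ` AT n"
      then obtain t where t: "anti C t" "leaves t = n" "X = ?f t" by (auto simp: AT_def)
      thus "X \<in> Env C n" unfolding Env_def quotient_def using cls anti_ftree by blast
    qed
  qed
  have "inj_on ?f (AT n)"
  proof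
    fix t t' assume tt: "t \<in> AT n" "t' \<in> AT n" "?f t = ?f t'"
    have "ftree C t'" using tt anti_ftree by (auto simp: AT_def)
    hence "env_rel C t' t'" by (rule env_refl)
    hence "env_rel C t t'" using tt by blast
    hence "nf t = nf t'" using env_nf by blast
    thus "t = t'" using nf_anti tt by (auto simp: AT_def)
  qed
  thus ?thesis using E card_image by metis
qed

definition FT where "FT n = {t. ftree C t \<and> leaves t = n}"

lemma finite_FT: "finite (FT n)"
proof (induction n rule: less_induct)
  case (less n)
  let ?S = "\<Union>m<n. FT m"
  have fS: "finite ?S" using less by auto
  have fX: "finite {x\<in>elts C. ar C x \<le> n}"
  proof -
    have "{x\<in>elts C. ar C x \<le> n} = (\<Union>m\<le>n. {x\<in>elts C. ar C x = m})" by auto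
    thus ?thesis using ax_fin by auto
  qed
  have "FT n \<subseteq> {Leaf} \<union> (\<lambda>(x,ts). Node x ts) ` ({x\<in>elts C. ar C x \<le> n} \<times> {ts. set ts \<subseteq> ?S \<and> length ts \<le> n})"
  proof
    fix t assume t: "t \<in> FT n"
    show "t \<in> {Leaf} \<union> (\<lambda>(x,ts). Node x ts) ` ({x\<in>elts C. ar C x \<le> n} \<times> {ts. set ts \<subseteq> ?S \<and> length ts \<le> n})"
    proof (cases t)
      case Leaf thus ?thesis by simp
    next
      case (Node x ts)
      have h: "x \<in> elts C" "ar C x \<noteq> 1" "length ts = ar C x" "\<forall>t\<in>set ts. ftree C t" "sum_list (map leaves ts) = n"
        using t Node by (auto simp: FT_def ftree_Node)
      have pos: "\<forall>u\<in>set ts. 1 \<le> leaves u" using h ftree_leaves by blast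
      have "length ts \<le> sum_list (map leaves ts)"
        using pos by (induction ts) auto
      hence ln: "length ts \<le> n" using h by simp
      have "ar C x \<ge> 1" using ar_pos h by auto
      hence l2: "length ts \<ge> 2" using h by auto
      have "set ts \<subseteq> ?S"
      proof
        fix u assume u: "u \<in> set ts"
        have s: "sum_list (map leaves ts) = leaves u + sum_list (map leaves (remove1 u ts))"
          using u by (rule sum_list_map_remove1)
        have "length (remove1 u ts) \<ge> 1" using u l2 by (simp add: length_remove1)
        then obtain v where v: "v \<in> set (remove1 u ts)" by (cases "remove1 u ts") auto
        hence "v \<in> set ts" by (meson notin_set_remove1)
        hence "leaves v \<ge> 1" using pos by blast
        moreover have "leaves v \<le> sum_list (map leaves (remove1 u ts))" using v by (simp add: member_le_sum_list)
        ultimately have "leaves u < n" using s h by simp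
        thus "u \<in> ?S" using h u by (auto simp: FT_def)
      qed
      thus ?thesis using Node h ln by auto
    qed
  qed
  moreover have "finite ({Leaf} \<union> (\<lambda>(x,ts). Node x ts) ` ({x\<in>elts C. ar C x \<le> n} \<times> {ts. set ts \<subseteq> ?S \<and> length ts \<le> n}))"
    using fX finite_lists_length_le[OF fS] by auto
  ultimately show ?case by (rule finite_subset)
qed

lemma finite_AT: "finite (AT n)"
  by (rule finite_subset[OF _ finite_FT[of n]]) (auto simp: AT_def FT_def anti_ftree)

lemma finite_ATc: "finite (ATc c n)"
  by (rule finite_subset[OF _ finite_AT[of n]]) (auto simp: AT_def ATc_def)

lemma anti_root_col: "anti C (Node x ts) \<Longrightarrow> outc C x \<in> {1..k}"
proof -
  assume "anti C (Node x ts)"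
  hence "x \<in> elts C" unfolding anti_Node by simp
  thus ?thesis using ax_elt by simp
qed

lemma AT_split: "AT n = (if n = 1 then {Leaf} else {}) \<union> (\<Union>c\<in>{1..k}. ATc c n)"
proof -
  have "t \<in> AT n \<longleftrightarrow> t \<in> (if n = 1 then {Leaf} else {}) \<union> (\<Union>c\<in>{1..k}. ATc c n)" for t
  proof (cases t)
    case Leaf
    have "Leaf \<notin> ATc c n" for c by (simp add: ATc_def)
    thus ?thesis using Leaf by (simp add: AT_def anti_leaf)
  next
    case (Node x ts)
    have "anti C (Node x ts) \<Longrightarrow> outc C x \<in> {1..k}" by (rule anti_root_col)
    thus ?thesis using Node unfolding AT_def ATc_def by auto
  qed
  thus ?thesis by blast
qed

lemma card_AT: "card (AT n) = (if n = 1 then 1 else 0) + (\<Sum>c\<in>{1..k}. card (ATc c n))"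
proof -
  have d: "(if n = 1 then {Leaf} else {}) \<inter> (\<Union>c\<in>{1..k}. ATc c n) = {}" by (auto simp: ATc_def)
  have "card (\<Union>c\<in>{1..k}. ATc c n) = (\<Sum>c\<in>{1..k}. card (ATc c n))"
  proof (rule card_UN_disjoint)
    show "\<forall>i\<in>{1..k}. finite (ATc i n)" using finite_ATc by blast
    show "\<forall>i\<in>{1..k}. \<forall>j\<in>{1..k}. i \<noteq> j \<longrightarrow> ATc i n \<inter> ATc j n = {}" by (auto simp: ATc_def)
  qed simp
  moreover have "card (AT n) = card (if n = 1 then {Leaf} else {}) + card (\<Union>c\<in>{1..k}. ATc c n)"
  proof -
    have f1: "finite (if n = 1 then {Leaf} else ({} :: 'a tree set))" by simp
    have f2: "finite (\<Union>c\<in>{1..k}. ATc c n)" using finite_ATc by blast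
    show ?thesis unfolding AT_split using card_Un_disjoint[OF f1 f2 d] by simp
  qed
  ultimately show ?thesis by (cases "n = 1") simp_all
qed

lemma env_hilbert_nth: "fps_nth (env_hilbert C) n = of_nat (card (AT n))"
  by (simp add: env_hilbert_def card_Env)

lemma anti_hilbert_nth: "fps_nth (anti_hilbert C c) n = of_nat (card (ATc c n))"
  by (simp add: anti_hilbert_def ATc_def)

lemma part1: "env_hilbert C = fps_X + (\<Sum>c\<in>{1..k}. anti_hilbert C c)"
  by (rule fps_ext) (simp add: env_hilbert_nth card_AT fps_sum_nth anti_hilbert_nth)

end


context cop begin

definition OK where "OK d n = {t. anti C t \<and> leaves t = n \<and> okc C d t}"
definition LS where "LS cs m = {ts. list_all2 (\<lambda>t d. anti C t \<and> okc C d t) ts cs \<and> sum_list (map leaves ts) = m}"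
definition Fd where "Fd d = env_hilbert C - anti_hilbert C d"

lemma finite_OK: "finite (OK d n)"
  by (rule finite_subset[OF _ finite_AT[of n]]) (auto simp: AT_def OK_def)

lemma Fd_nth: "fps_nth (Fd d) n = of_nat (card (OK d n))"
proof -
  have u: "AT n = ATc d n \<union> OK d n"
    by (auto simp: AT_def ATc_def OK_def okc_def)
  have i: "ATc d n \<inter> OK d n = {}" by (auto simp: ATc_def OK_def okc_def)
  have "card (AT n) = card (ATc d n) + card (OK d n)"
    unfolding u using card_Un_disjoint[OF finite_ATc finite_OK i] by simp
  thus ?thesis by (simp add: Fd_def env_hilbert_nth anti_hilbert_nth)
qed

lemma LS_Cons: "LS (d # cs) m = (\<Union>a\<in>{0..m}. (\<lambda>(t,ts). t # ts) ` (OK d a \<times> LS cs (m - a)))"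
proof
  show "LS (d # cs) m \<subseteq> (\<Union>a\<in>{0..m}. (\<lambda>(t,ts). t # ts) ` (OK d a \<times> LS cs (m - a)))"
  proof
    fix us assume "us \<in> LS (d # cs) m"
    then obtain t ts where us: "us = t # ts" "anti C t" "okc C d t"
      "list_all2 (\<lambda>t d. anti C t \<and> okc C d t) ts cs" "leaves t + sum_list (map leaves ts) = m"
      by (auto simp: LS_def list_all2_Cons2)
    hence "t \<in> OK d (leaves t)" "ts \<in> LS cs (m - leaves t)" "leaves t \<in> {0..m}"
      by (auto simp: OK_def LS_def)
    thus "us \<in> (\<Union>a\<in>{0..m}. (\<lambda>(t,ts). t # ts) ` (OK d a \<times> LS cs (m - a)))" using us by blast
  qed
next
  show "(\<Union>a\<in>{0..m}. (\<lambda>(t,ts). t # ts) ` (OK d a \<times> LS cs (m - a))) \<subseteq> LS (d # cs) m"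
    by (auto simp: OK_def LS_def)
qed

lemma LS_prop: "finite (LS cs m) \<and> of_nat (card (LS cs m)) = fps_nth (prod_list (map Fd cs)) m"
proof (induction cs arbitrary: m)
  case Nil
  have "LS [] m = (if m = 0 then {[]} else {})" by (auto simp: LS_def)
  thus ?case by simp
next
  case (Cons d cs)
  let ?S = "\<lambda>a. (\<lambda>(t,ts). t # ts) ` (OK d a \<times> LS cs (m - a))"
  have fin: "finite (?S a)" for a using Cons.IH finite_OK by blast
  have cS: "card (?S a) = card (OK d a) * card (LS cs (m - a))" for a
  proof -
    have "inj_on (\<lambda>(t,ts). t # ts) (OK d a \<times> LS cs (m - a))" by (auto simp: inj_on_def)
    thus ?thesis by (simp add: card_image card_cartesian_product)
  qed
  have disj: "\<forall>a\<in>{0..m}. \<forall>b\<in>{0..m}. a \<noteq> b \<longrightarrow> ?S a \<inter> ?S b = {}"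
    by (auto simp: OK_def)
  have "card (LS (d # cs) m) = (\<Sum>a\<in>{0..m}. card (?S a))"
    unfolding LS_Cons by (rule card_UN_disjoint) (use fin disj in auto)
  hence "(of_nat (card (LS (d # cs) m)) :: int) = (\<Sum>a\<in>{0..m}. of_nat (card (OK d a)) * of_nat (card (LS cs (m - a))))"
    using cS by simp
  also have "\<dots> = (\<Sum>a\<in>{0..m}. fps_nth (Fd d) a * fps_nth (prod_list (map Fd cs)) (m - a))"
    using Cons.IH Fd_nth by simp
  also have "\<dots> = fps_nth (prod_list (map Fd (d # cs))) m" by (simp add: fps_mult_nth)
  finally show ?case using fin unfolding LS_Cons by blast
qed

definition X where "X c m = {x\<in>elts C. ar C x \<noteq> 1 \<and> outc C x = c \<and> ar C x \<le> m}"

lemma finite_X: "finite (X c m)"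
proof -
  have "X c m \<subseteq> (\<Union>j\<le>m. {x\<in>elts C. ar C x = j})" by (auto simp: X_def)
  thus ?thesis using ax_fin by (meson finite_UN_I finite_atMost finite_subset)
qed

lemma ATc_UN: "ATc c m = (\<Union>x\<in>X c m. Node x ` LS (incs x) m)"
proof
  show "ATc c m \<subseteq> (\<Union>x\<in>X c m. Node x ` LS (incs x) m)"
  proof
    fix t assume "t \<in> ATc c m"
    then obtain x ts where t: "t = Node x ts" "anti C (Node x ts)" "outc C x = c" "sum_list (map leaves ts) = m"
      by (auto simp: ATc_def)
    have h: "x \<in> elts C" "ar C x \<noteq> 1" "length ts = ar C x" "list_all2 (\<lambda>t d. anti C t \<and> okc C d t) ts (incs x)"
      using t(2) unfolding anti_Node2 by auto
    have "\<forall>u\<in>set ts. anti C u" using h(4) by (auto simp: list_all2_conv_all_nth in_set_conv_nth)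
    hence pos: "\<forall>u\<in>set ts. 1 \<le> leaves u" using anti_ftree ftree_leaves by blast
    have "length ts \<le> sum_list (map leaves ts)" using pos by (induction ts) auto
    hence "x \<in> X c m" using h t by (auto simp: X_def)
    moreover have "ts \<in> LS (incs x) m" using h t by (simp add: LS_def)
    ultimately show "t \<in> (\<Union>x\<in>X c m. Node x ` LS (incs x) m)" using t by blast
  qed
next
  show "(\<Union>x\<in>X c m. Node x ` LS (incs x) m) \<subseteq> ATc c m"
  proof
    fix t assume "t \<in> (\<Union>x\<in>X c m. Node x ` LS (incs x) m)"
    then obtain x ts where t: "t = Node x ts" "x \<in> X c m" "ts \<in> LS (incs x) m" by blast
    hence "length ts = ar C x" by (auto simp: LS_def dest: list_all2_lengthD)
    hence "anti C (Node x ts)" using t unfolding anti_Node2 by (auto simp: X_def LS_def)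
    thus "t \<in> ATc c m" using t by (auto simp: ATc_def X_def LS_def)
  qed
qed

lemma card_ATc: "card (ATc c m) = (\<Sum>x\<in>X c m. card (LS (incs x) m))"
proof -
  have "card (\<Union>x\<in>X c m. Node x ` LS (incs x) m) = (\<Sum>x\<in>X c m. card (Node x ` LS (incs x) m))"
    by (rule card_UN_disjoint) (use finite_X LS_prop in auto)
  moreover have "card (Node x ` LS (incs x) m) = card (LS (incs x) m)" for x
    by (rule card_image) (simp add: inj_on_def)
  ultimately show ?thesis unfolding ATc_UN by simp
qed

definition ax where "ax x d = card {i\<in>{1..ar C x}. inc C x i = d}"

lemma count_incs: "count_list (incs x) d = ax x d"
proof -
  have "count_list (incs x) d = card {i. i < ar C x \<and> d = incs x ! i}"
    by (simp add: count_list_eq_length_filter length_filter_conv_card)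
  also have "{i. i < ar C x \<and> d = incs x ! i} = {i. i < ar C x \<and> inc C x (Suc i) = d}"
    by (auto simp: nth_incs)
  also have "card \<dots> = card (Suc ` {i. i < ar C x \<and> inc C x (Suc i) = d})" by (simp add: card_image)
  also have "Suc ` {i. i < ar C x \<and> inc C x (Suc i) = d} = {i\<in>{1..ar C x}. inc C x i = d}"
  proof (rule set_eqI)
    fix j show "j \<in> Suc ` {i. i < ar C x \<and> inc C x (Suc i) = d} \<longleftrightarrow> j \<in> {i\<in>{1..ar C x}. inc C x i = d}"
      by (cases j) auto
  qed
  finally show ?thesis by (simp add: ax_def)
qed

lemma prod_incs: "x \<in> elts C \<Longrightarrow> prod_list (map Fd (incs x)) = (\<Prod>d\<in>{1..k}. Fd d ^ ax x d)"
proof -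
  assume x: "x \<in> elts C"
  have "set (incs x) \<subseteq> {1..k}" using incs_in[OF x] by blast
  thus ?thesis using prod_list_count[of "{1..k}" "incs x" Fd] by (simp add: count_incs)
qed

lemma ar_ax: "x \<in> elts C \<Longrightarrow> ar C x = (\<Sum>d\<in>{1..k}. ax x d)"
proof -
  assume x: "x \<in> elts C"
  have "inc C x ` {1..ar C x} \<subseteq> {1..k}" using ax_elt[OF x] by auto
  hence "(\<Sum>d\<in>{1..k}. \<Sum>i\<in>{i\<in>{1..ar C x}. inc C x i = d}. (1::nat)) = (\<Sum>i\<in>{1..ar C x}. 1)"
    by (intro sum.group) auto
  thus ?thesis by (simp add: ax_def)
qed

lemma ax_supp: "x \<in> elts C \<Longrightarrow> d \<notin> {1..k} \<Longrightarrow> ax x d = 0"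
  using ax_elt[of x] by (auto simp: ax_def)

lemma part2: "c \<in> {1..k} \<Longrightarrow> anti_hilbert C c = msubst k (coloured_hilbert C c) (\<lambda>d. env_hilbert C - anti_hilbert C d)"
proof (rule fps_ext)
  fix m :: nat
  let ?Adm = "{\<alpha>. (\<forall>d. d \<notin> {1..k} \<longrightarrow> \<alpha> d = 0) \<and> (\<Sum>d\<in>{1..k}. \<alpha> d) \<le> m}"
  let ?G = "\<lambda>\<alpha>. fps_nth (\<Prod>d\<in>{1..k}. Fd d ^ \<alpha> d) m"
  have finA: "finite ?Adm"
  proof (rule finite_subset)
    show "?Adm \<subseteq> {f. \<forall>d. (d \<in> {1..k} \<longrightarrow> f d \<in> {0..m}) \<and> (d \<notin> {1..k} \<longrightarrow> f d = 0)}"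
    proof (safe)
      fix f d assume f: "\<forall>d. d \<notin> {1..k} \<longrightarrow> f d = 0" "(\<Sum>d\<in>{1..k}. f d) \<le> m" "d \<in> {1..k}"
      have "f d \<le> (\<Sum>d\<in>{1..k}. f d)" using f(3) by (intro member_le_sum) auto
      thus "f d \<in> {0..m}" using f by simp
    qed auto
    show "finite {f. \<forall>d. (d \<in> {1..k} \<longrightarrow> f d \<in> {0..m}) \<and> (d \<notin> {1..k} \<longrightarrow> (f d :: nat) = 0)}"
      by (rule finite_set_of_finite_funs) auto
  qed
  have img: "ax ` X c m \<subseteq> ?Adm"
  proof
    fix a assume "a \<in> ax ` X c m"
    then obtain x where x: "x \<in> X c m" "a = ax x" by blast
    hence "x \<in> elts C" "ar C x \<le> m" by (auto simp: X_def)
    thus "a \<in> ?Adm" using x ax_supp ar_ax by auto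
  qed
  have "fps_nth (anti_hilbert C c) m = (\<Sum>x\<in>X c m. of_nat (card (LS (incs x) m)))"
    by (simp add: anti_hilbert_nth card_ATc)
  also have "\<dots> = (\<Sum>x\<in>X c m. ?G (ax x))"
    using LS_prop prod_incs by (intro sum.cong) (auto simp: X_def)
  also have "\<dots> = (\<Sum>\<alpha>\<in>?Adm. \<Sum>x\<in>{x\<in>X c m. ax x = \<alpha>}. ?G (ax x))"
    by (rule sum.group[symmetric]) (use finite_X finA img in auto)
  also have "\<dots> = (\<Sum>\<alpha>\<in>?Adm. of_nat (coloured_hilbert C c \<alpha>) * ?G \<alpha>)"
  proof (rule sum.cong)
    fix \<alpha> assume a: "\<alpha> \<in> ?Adm"
    have "{x\<in>X c m. ax x = \<alpha>} = {x \<in> elts C. ar C x \<noteq> 1 \<and> outc C x = c \<and>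
      (\<forall>d. \<alpha> d = card {i \<in> {1..ar C x}. inc C x i = d})}"
    proof (rule set_eqI)
      fix x
      have e: "(ax x = \<alpha>) \<longleftrightarrow> (\<forall>d. \<alpha> d = card {i \<in> {1..ar C x}. inc C x i = d})"
        by (auto simp: ax_def)
      show "x \<in> {x\<in>X c m. ax x = \<alpha>} \<longleftrightarrow> x \<in> {x \<in> elts C. ar C x \<noteq> 1 \<and> outc C x = c \<and>
        (\<forall>d. \<alpha> d = card {i \<in> {1..ar C x}. inc C x i = d})}"
      proof
        assume "x \<in> {x\<in>X c m. ax x = \<alpha>}" thus "x \<in> {x \<in> elts C. ar C x \<noteq> 1 \<and> outc C x = c \<and>
        (\<forall>d. \<alpha> d = card {i \<in> {1..ar C x}. inc C x i = d})}" using e by (auto simp: X_def)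
      next
        assume xx: "x \<in> {x \<in> elts C. ar C x \<noteq> 1 \<and> outc C x = c \<and>
        (\<forall>d. \<alpha> d = card {i \<in> {1..ar C x}. inc C x i = d})}"
        hence ax: "ax x = \<alpha>" "x \<in> elts C" using e by auto
        hence "ar C x \<le> m" using ar_ax a by auto
        thus "x \<in> {x\<in>X c m. ax x = \<alpha>}" using xx ax by (auto simp: X_def)
      qed
    qed
    hence c2: "card {x\<in>X c m. ax x = \<alpha>} = coloured_hilbert C c \<alpha>"
      unfolding coloured_hilbert_def by simp
    have "(\<Sum>x\<in>{x\<in>X c m. ax x = \<alpha>}. ?G (ax x)) = (\<Sum>x\<in>{x\<in>X c m. ax x = \<alpha>}. ?G \<alpha>)"
      by (rule sum.cong) auto
    hence "(\<Sum>x\<in>{x\<in>X c m. ax x = \<alpha>}. ?G (ax x)) = (\<Sum>x\<in>{x\<in>X c m. ax x = \<alpha>}. ?G \<alpha>)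
       \<and> card {x\<in>X c m. ax x = \<alpha>} = coloured_hilbert C c \<alpha>" using c2 by simp
    thus "(\<Sum>x\<in>{x\<in>X c m. ax x = \<alpha>}. ?G (ax x)) = of_nat (coloured_hilbert C c \<alpha>) * ?G \<alpha>"
      by simp
  qed simp
  also have "\<dots> = fps_nth (msubst k (coloured_hilbert C c) (\<lambda>d. env_hilbert C - anti_hilbert C d)) m"
    by (simp add: msubst_def Fd_def)
  finally show "fps_nth (anti_hilbert C c) m = fps_nth (msubst k (coloured_hilbert C c) (\<lambda>d. env_hilbert C - anti_hilbert C d)) m" .
qed

end

theorem proposition1p3:
  fixes k :: nat and C :: "'a col_operad"
  assumes "k \<ge> 1" and "coloured_operad k C"
  shows "env_hilbert C = fps_X + (\<Sum>c\<in>{1..k}. anti_hilbert C c)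
     \<and> (\<forall>c\<in>{1..k}. anti_hilbert C c =
          msubst k (coloured_hilbert C c) (\<lambda>d. env_hilbert C - anti_hilbert C d))"
proof -
  interpret cop k C by (rule cop.intro) (rule assms(2))
  show ?thesis using part1 part2 by blast
qed


end
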